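(* Assume the following hypothesis: for every fixed $\epsilon>0$, $$\sum_{d\le x^{1-\epsilon}}\left|\pi(x;d,1)-\frac{\pi(x)}{\phi(d)}\right| = o(\pi(x)) \quad\text{as } x\to\infty.$$ Fix $U\ge1$. Suppose that $P$ is a set of primes less than $x$ with $\{p\le y\}\subseteq P$, where $y=x^{1/u}$ and $1\le u\le U$. Then $$\frac{\pi(x,P)}{\pi(x)}\sim\frac{\Psi(x,P)}{x}\quad\text{as } x\to\infty.$$
   Context: $\pi(x)$ is the number of primes $\le x$, $\pi(x;d,1)$ the number of primes $p\le x$ with $p\equiv1\pmod d$, $\phi$ is Euler's function. For a set $P$ of primes, $\Psi(x,P)=\#\{n\le x:\ p\mid n\Rightarrow p\in P\}$ and $\pi(x,P)=\#\{p\le x\text{ prime}:\ q\mid p-1\Rightarrow q\in P\}$ ($p,q$ primes). *)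

theory Defs
  imports Complex_Main "HOL-Number_Theory.Number_Theory" "HOL-Library.Landau_Symbols"
begin

definition prime_pi :: "real \<Rightarrow> nat" where
  "prime_pi x = card {p::nat. prime p \<and> real p \<le> x}"

definition prime_pi_ap :: "real \<Rightarrow> nat \<Rightarrow> nat" where
  "prime_pi_ap x d = card {p::nat. prime p \<and> real p \<le> x \<and> [p = 1] (mod d)}"

definition Psi_set :: "real \<Rightarrow> nat set \<Rightarrow> nat" where
  "Psi_set x P = card {n::nat. 1 \<le> n \<and> real n \<le> x \<and> (\<forall>p. prime p \<longrightarrow> p dvd n \<longrightarrow> p \<in> P)}"

definition prime_pi_set :: "real \<Rightarrow> nat set \<Rightarrow> nat" where
  "prime_pi_set x P = card {p::nat. prime p \<and> real p \<le> x \<and>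
      (\<forall>q. prime q \<longrightarrow> q dvd (p - 1) \<longrightarrow> q \<in> P)}"

end

theory Submission
  imports Defs
begin

fun LK :: "nat \<Rightarrow> nat \<Rightarrow> real" where
  "LK 0 n = (if n = 1 then 1 else 0)"
| "LK (Suc k) n = LK k n * ln (real n) + (\<Sum>d | d dvd n. mangoldt d * LK k (n div d))"

lemma LK_zero [simp]: "LK k 0 = 0"
  by (induction k) auto

lemma LK_nonneg: "LK k n \<ge> 0"
proof (induction k arbitrary: n)
  case 0 then show ?case by simp
next
  case (Suc k)
  have a: "LK k n * ln (real n) \<ge> 0"
  proof (cases "n = 0")
    case False then show ?thesis using Suc by (intro mult_nonneg_nonneg) auto
  qed simp
  have b: "(\<Sum>d | d dvd n. mangoldt d * LK k (n div d)) \<ge> 0"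
    by (intro sum_nonneg mult_nonneg_nonneg mangoldt_nonneg Suc)
  show ?case using a b by simp
qed

lemma divisor_swap:
  fixes f :: "nat \<Rightarrow> nat \<Rightarrow> real"
  assumes "n > 0"
  shows "(\<Sum>d | d dvd n. \<Sum>a | a dvd d. f a (d div a)) = (\<Sum>b | b dvd n. \<Sum>a | a dvd n div b. f a b)"
proof -
  have fin: "finite {d. d dvd n}" using assms by simp
  have fin2: "\<And>d. d dvd n \<Longrightarrow> finite {a. a dvd d}" using assms by (auto intro: finite_divisors_nat)
  have fin3: "\<And>b. b dvd n \<Longrightarrow> finite {a. a dvd n div b}" using assms
    by (intro finite_divisors_nat) (auto elim!: dvdE)
  have "(\<Sum>d | d dvd n. \<Sum>a | a dvd d. f a (d div a)) =
        (\<Sum>(d,a) \<in> Sigma {d. d dvd n} (\<lambda>d. {a. a dvd d}). f a (d div a))"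
    using fin fin2 by (subst sum.Sigma) auto
  also have "\<dots> = (\<Sum>(b,a) \<in> Sigma {b. b dvd n} (\<lambda>b. {a. a dvd n div b}). f a b)"
  proof (rule sum.reindex_bij_witness[where i = "\<lambda>(b,a). (a*b, a)" and j = "\<lambda>(d,a). (d div a, a)"])
    fix ba assume "ba \<in> Sigma {b. b dvd n} (\<lambda>b. {a. a dvd n div b})"
    then obtain b a where ba: "ba = (b,a)" "b dvd n" "a dvd n div b" by auto
    then have "a > 0" using assms by (auto elim!: dvdE)
    then show "(case case ba of (b, a) \<Rightarrow> (a * b, a) of (d, a) \<Rightarrow> (d div a, a)) = ba"
      using ba by simp
    have "a * b dvd n"
    proof -
      obtain c where c: "n = b * c" using ba by (auto elim!: dvdE)
      then have "b > 0" using assms by auto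
      then have "n div b = c" using c by simp
      then have "a dvd c" using ba by simp
      then show ?thesis using c by (simp add: mult.commute mult_dvd_mono)
    qed
    then show "(case ba of (b, a) \<Rightarrow> (a * b, a)) \<in> Sigma {d. d dvd n} (\<lambda>d. {a. a dvd d})"
      using ba by auto
  next
    fix da assume "da \<in> Sigma {d. d dvd n} (\<lambda>d. {a. a dvd d})"
    then obtain d a where da: "da = (d,a)" "d dvd n" "a dvd d" by auto
    then have "a > 0" using assms by (auto elim!: dvdE)
    show "(case case da of (d, a) \<Rightarrow> (d div a, a) of (b, a) \<Rightarrow> (a * b, a)) = da"
      using da by (simp add: dvd_mult_div_cancel)
    have "d div a dvd d" using da(3) by (metis dvd_mult_div_cancel dvd_triv_right)
    then have "d div a dvd n" using da(2) by (rule dvd_trans)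
    moreover have "a dvd n div (d div a)"
    proof -
      obtain e where e: "d = a * e" using da by (auto elim!: dvdE)
      obtain c where c: "n = d * c" using da by (auto elim!: dvdE)
      have "e > 0" using e c assms by auto
      have "d div a = e" using e \<open>a > 0\<close> by simp
      moreover have "n div e = a * c" using c e \<open>e > 0\<close> by simp
      ultimately show ?thesis by simp
    qed
    ultimately show "(case da of (d, a) \<Rightarrow> (d div a, a)) \<in> Sigma {b. b dvd n} (\<lambda>b. {a. a dvd n div b})"
      using da by auto
    show "(case case da of (d, a) \<Rightarrow> (d div a, a) of (b, a) \<Rightarrow> f a b) = (case da of (d, a) \<Rightarrow> f a (d div a))"
      using da by simp
  qed
  also have "\<dots> = (\<Sum>b | b dvd n. \<Sum>a | a dvd n div b. f a b)"
    using fin fin3 by (subst sum.Sigma) auto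
  finally show ?thesis .
qed

lemma LK_sum:
  assumes "n > 0"
  shows "(\<Sum>d | d dvd n. LK k d) = ln (real n) ^ k"
  using assms
proof (induction k arbitrary: n)
  case 0
  have "(\<Sum>d | d dvd n. LK 0 d) = (\<Sum>d \<in> {d. d dvd n}. if d = 1 then 1 else 0)" by simp
  also have "\<dots> = 1" using 0 by (subst sum.delta) auto
  finally show ?case by simp
next
  case (Suc k)
  have fin: "finite {d. d dvd n}" using Suc by simp
  have "(\<Sum>d | d dvd n. \<Sum>a | a dvd d. mangoldt a * LK k (d div a)) =
        (\<Sum>b | b dvd n. \<Sum>a | a dvd n div b. mangoldt a * LK k b)"
    using divisor_swap[OF Suc.prems, of "\<lambda>a b. mangoldt a * LK k b"] by simp
  also have "\<dots> = (\<Sum>b | b dvd n. LK k b * ln (real (n div b)))"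
  proof (rule sum.cong[OF refl])
    fix b assume "b \<in> {b. b dvd n}"
    then have "n div b > 0" using Suc.prems by (auto elim!: dvdE)
    then have "(\<Sum>a | a dvd n div b. mangoldt a :: real) = ln (real (n div b))"
      using mangoldt_sum[of "n div b", where 'a=real] by (simp add: of_real_eq_id)
    then show "(\<Sum>a | a dvd n div b. mangoldt a * LK k b) = LK k b * ln (real (n div b))"
      by (simp add: sum_distrib_right[symmetric] mult.commute)
  qed
  finally have eq: "(\<Sum>d | d dvd n. \<Sum>a | a dvd d. mangoldt a * LK k (d div a)) =
        (\<Sum>b | b dvd n. LK k b * ln (real (n div b)))" .
  have "(\<Sum>d | d dvd n. LK (Suc k) d) = (\<Sum>d | d dvd n. LK k d * ln (real d)) +
         (\<Sum>d | d dvd n. \<Sum>a | a dvd d. mangoldt a * LK k (d div a))"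
    by (simp add: sum.distrib)
  also have "\<dots> = (\<Sum>d | d dvd n. LK k d * (ln (real d) + ln (real (n div d))))"
    unfolding eq by (simp add: sum.distrib[symmetric] algebra_simps)
  also have "\<dots> = (\<Sum>d | d dvd n. LK k d * ln (real n))"
  proof (rule sum.cong[OF refl])
    fix d assume "d \<in> {d. d dvd n}"
    then obtain c where c: "n = d * c" by (auto elim!: dvdE)
    then have "d > 0" "c > 0" using Suc.prems by auto
    then have "ln (real d) + ln (real (n div d)) = ln (real n)"
      using c by (simp add: ln_mult)
    then show "LK k d * (ln (real d) + ln (real (n div d))) = LK k d * ln (real n)" by simp
  qed
  also have "\<dots> = ln (real n) ^ Suc k"
    using Suc.IH[OF Suc.prems] by (simp add: sum_distrib_right[symmetric])
  finally show ?case .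
qed

lemma LK_le:
  assumes "n > 0"
  shows "LK k n \<le> ln (real n) ^ k"
proof -
  have "LK k n \<le> (\<Sum>d | d dvd n. LK k d)"
    using assms by (intro member_le_sum) (auto simp: LK_nonneg)
  then show ?thesis using LK_sum[OF assms] by simp
qed

lemma LK_lower:
  assumes "z \<ge> 1" "n > 1" "\<And>p. p \<in> prime_factors n \<Longrightarrow> real p \<ge> z"
    "card (prime_factors n) \<le> k"
  shows "LK k n \<ge> ln z ^ k"
  using assms(2-4)
proof (induction k arbitrary: n)
  case 0
  then obtain p where "prime p" "p dvd n" using prime_factor_nat[of n] by auto
  then have "p \<in> prime_factors n" using 0(1) by (auto simp: in_prime_factors_iff)
  then have "card (prime_factors n) > 0" by (subst card_gt_0_iff) auto
  then show ?case using 0 by linarith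
next
  case (Suc k)
  obtain q where q: "prime q" "q dvd n" using prime_factor_nat[of n] Suc.prems by auto
  then have qin: "q \<in> prime_factors n" using Suc.prems by (auto simp: in_prime_factors_iff)
  then have qz: "real q \<ge> z" using Suc.prems by auto
  have lnz: "ln z \<ge> 0" using assms(1) by simp
  have lnq: "ln (real q) \<ge> ln z" using qz assms(1) by simp
  have sum_nn: "(\<Sum>d | d dvd n. mangoldt d * LK k (n div d)) \<ge> 0"
    by (intro sum_nonneg mult_nonneg_nonneg mangoldt_nonneg LK_nonneg)
  have fin: "finite {d. d dvd n}" using Suc.prems by simp
  show ?case
  proof (cases "card (prime_factors n) \<le> k")
    case True
    have IH: "LK k n \<ge> ln z ^ k" using Suc.IH[OF Suc.prems(1,2) True] .
    have "real q \<le> real n" using q Suc.prems by (simp add: dvd_imp_le)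
    then have "ln (real n) \<ge> ln z" using qz assms(1) by simp
    then have "LK k n * ln (real n) \<ge> ln z ^ k * ln z"
      using IH lnz by (intro mult_mono) (auto simp: LK_nonneg)
    then show ?thesis using sum_nn by (simp add: mult.commute)
  next
    case False
    then have cardn: "card (prime_factors n) = Suc k" using Suc.prems by simp
    define a where "a = q ^ multiplicity q n"
    define b where "b = n div a"
    have mpos: "multiplicity q n > 0" using q Suc.prems
      by (simp add: prime_multiplicity_gt_zero_iff)
    have adv: "a dvd n" unfolding a_def by (rule multiplicity_dvd)
    have man: "mangoldt a = ln (real q)" unfolding a_def using q mpos by simp
    have nab: "n = a * b" unfolding b_def using adv by simp
    have bpos: "b > 0" using nab Suc.prems by (cases b) auto
    have qnb: "\<not> q dvd b" unfolding b_def a_def using Suc.prems q by (intro multiplicity_decompose) auto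
    have pfb: "prime_factors b \<subseteq> prime_factors n - {q}"
    proof
      fix p assume "p \<in> prime_factors b"
      then have "prime p" "p dvd b" by (auto simp: in_prime_factors_iff)
      then have "p dvd n" using nab by simp
      moreover have "p \<noteq> q" using qnb \<open>p dvd b\<close> by auto
      ultimately show "p \<in> prime_factors n - {q}" using \<open>prime p\<close> Suc.prems
        by (auto simp: in_prime_factors_iff)
    qed
    have cb: "card (prime_factors b) \<le> k"
    proof -
      have "card (prime_factors b) \<le> card (prime_factors n - {q})"
        by (intro card_mono pfb) auto
      also have "\<dots> = k" using cardn qin by simp
      finally show ?thesis .
    qed
    have trm: "mangoldt a * LK k b \<ge> ln z ^ Suc k"
    proof (cases "b = 1")
      case True
      have e: "prime_factors a = {q}" unfolding a_def using q mpos
        by (simp add: prime_factorization_prime_power)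
      have "n = a" using nab True by simp
      then have "prime_factors n = {q}" using e by simp
      then have "k = 0" using cardn by simp
      then show ?thesis using True man lnq by simp
    next
      case False
      then have "b > 1" using bpos by simp
      have "LK k b \<ge> ln z ^ k"
      proof (rule Suc.IH[OF \<open>b > 1\<close> _ cb])
        fix p assume "p \<in> prime_factors b"
        then show "z \<le> real p" using pfb Suc.prems(2) by auto
      qed
      then have "ln (real q) * LK k b \<ge> ln z * ln z ^ k"
        using lnq lnz by (intro mult_mono) auto
      then show ?thesis using man by simp
    qed
    have "mangoldt a * LK k (n div a) \<le> (\<Sum>d | d dvd n. mangoldt d * LK k (n div d))"
      using fin adv by (intro member_le_sum) (auto intro!: mult_nonneg_nonneg mangoldt_nonneg LK_nonneg)
    moreover have "LK k n * ln (real n) \<ge> 0"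
      using Suc.prems by (intro mult_nonneg_nonneg LK_nonneg) auto
    ultimately show ?thesis using trm b_def by simp
  qed
qed


lemma sum_card_swap:
  assumes "finite A" "finite B"
  shows "(\<Sum>a\<in>A. card {b\<in>B. R a b}) = (\<Sum>b\<in>B. card {a\<in>A. R a b})"
proof -
  have "(\<Sum>a\<in>A. card {b\<in>B. R a b}) = (\<Sum>a\<in>A. \<Sum>b\<in>B. if R a b then 1 else 0)"
    using assms by (simp add: sum.inter_filter[symmetric])
  also have "\<dots> = (\<Sum>b\<in>B. \<Sum>a\<in>A. if R a b then 1 else 0)" by (rule sum.swap)
  also have "\<dots> = (\<Sum>b\<in>B. card {a\<in>A. R a b})"
    using assms by (simp add: sum.inter_filter[symmetric])
  finally show ?thesis .
qed

lemma sum_if_dvd_swap: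
  fixes f :: "nat \<Rightarrow> real"
  assumes "finite A" "finite E"
  shows "(\<Sum>n\<in>A. \<Sum>d\<in>E. if d dvd g n then f d else 0) = (\<Sum>d\<in>E. f d * real (card {n\<in>A. d dvd g n}))"
proof -
  have "(\<Sum>n\<in>A. \<Sum>d\<in>E. if d dvd g n then f d else 0) = (\<Sum>d\<in>E. \<Sum>n\<in>A. if d dvd g n then f d else 0)"
    by (rule sum.swap)
  also have "\<dots> = (\<Sum>d\<in>E. f d * real (card {n\<in>A. d dvd g n}))"
  proof (rule sum.cong[OF refl])
    fix d
    show "(\<Sum>n\<in>A. if d dvd g n then f d else 0) = f d * real (card {n\<in>A. d dvd g n})"
      using assms by (simp add: sum.inter_filter[symmetric] mult.commute)
  qed
  finally show ?thesis .
qed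

lemma divisor_sum_as_if:
  fixes f :: "nat \<Rightarrow> real"
  assumes "m > 0" "finite E" "\<And>d. d dvd m \<Longrightarrow> d \<in> E"
  shows "(\<Sum>d | d dvd m. f d) = (\<Sum>d\<in>E. if d dvd m then f d else 0)"
proof -
  have "(\<Sum>d\<in>E. if d dvd m then f d else 0) = (\<Sum>d\<in>{d\<in>E. d dvd m}. f d)"
    using assms by (simp add: sum.inter_filter)
  also have "{d\<in>E. d dvd m} = {d. d dvd m}" using assms by auto
  finally show ?thesis by simp
qed

lemma card_multiples:
  fixes d M :: nat
  assumes "d > 0"
  shows "card {n\<in>{1..M}. d dvd n} = M div d"
proof -
  have "{n\<in>{1..M}. d dvd n} = (\<lambda>k. d * k) ` {1..M div d}"
  proof (rule Set.set_eqI)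
    fix n show "n \<in> {n\<in>{1..M}. d dvd n} \<longleftrightarrow> n \<in> (\<lambda>k. d * k) ` {1..M div d}"
    proof
    assume "n \<in> {n\<in>{1..M}. d dvd n}"
    then obtain k where k: "n = d * k" "1 \<le> n" "n \<le> M" by (auto elim!: dvdE)
    then have "k \<ge> 1" by (cases k) auto
    moreover have "k \<le> M div d" using k assms by (simp add: less_eq_div_iff_mult_less_eq mult.commute)
    ultimately show "n \<in> (\<lambda>k. d * k) ` {1..M div d}" using k by auto
  next
    assume "n \<in> (\<lambda>k. d * k) ` {1..M div d}"
    then obtain k where k0: "n = d * k" "k \<in> {1..M div d}" by (rule imageE)
    then have k: "n = d * k" "1 \<le> k" "k \<le> M div d" by auto
    then have "d * k \<le> M" using assms by (simp add: less_eq_div_iff_mult_less_eq mult.commute)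
    moreover have "1 \<le> d * k" using k assms by simp
    ultimately show "n \<in> {n\<in>{1..M}. d dvd n}" using k by auto
  qed
  qed
  also have "card \<dots> = card {1..M div d}"
    using assms by (intro card_image) (auto simp: inj_on_def)
  finally show ?thesis by simp
qed

lemma sum_Pow_alt:
  assumes "finite S"
  shows "(\<Sum>T\<in>Pow S. (-1::real) ^ card T) = (if S = {} then 1 else 0)"
proof -
  have "(\<Prod>x\<in>S. (1::real) - 1) = (\<Sum>X\<in>Pow S. (-1) ^ card X * (\<Prod>x\<in>X. 1) * (\<Prod>x\<in>S-X. 1))"
    by (rule prod_diff_conv_sum[OF assms])
  moreover have "S \<noteq> {} \<Longrightarrow> (0::real) ^ card S = 0" using assms by (simp add: card_gt_0_iff)
  ultimately show ?thesis using assms by auto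
qed

lemma prod_primes_dvd:
  fixes T :: "nat set"
  assumes "finite T" "\<And>q. q \<in> T \<Longrightarrow> prime q" "\<And>q. q \<in> T \<Longrightarrow> q dvd m"
  shows "\<Prod>T dvd m"
  using assms
proof (induction T rule: finite_induct)
  case empty then show ?case by simp
next
  case (insert q T)
  have "\<not> q dvd \<Prod>T"
  proof
    assume "q dvd \<Prod>T"
    then obtain x where "x \<in> T" "q dvd x" using insert by (auto simp: prime_dvd_prod_iff)
    then have "q = x" using insert by (simp add: primes_dvd_imp_eq)
    then show False using insert \<open>x \<in> T\<close> by auto
  qed
  then have "coprime q (\<Prod>T)" using insert by (simp add: prime_imp_coprime)
  moreover have "\<Prod>T dvd m" using insert by auto
  ultimately show ?case using insert by (simp add: divides_mult)
qed

lemma prod_primes_dvd_iff: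
  fixes T :: "nat set"
  assumes "finite T" "\<And>q. q \<in> T \<Longrightarrow> prime q"
  shows "\<Prod>T dvd m \<longleftrightarrow> (\<forall>q\<in>T. q dvd m)"
  using assms prod_primes_dvd[OF assms] by (auto intro: dvd_trans[OF dvd_prodI[OF assms(1)]])

lemma prime_factors_prod_primes:
  fixes T :: "nat set"
  assumes "finite T" "\<And>q. q \<in> T \<Longrightarrow> prime q"
  shows "prime_factors (\<Prod>T) = T"
proof -
  have "0 \<notin> (\<lambda>x. x) ` T" using assms(2)[of 0] by auto
  then have "prime_factors (\<Prod>T) = \<Union>((prime_factors \<circ> (\<lambda>x. x)) ` T)"
    using prime_factors_prod[OF assms(1), of "\<lambda>x. x"] by simp
  also have "\<dots> = T" using assms by (auto simp: prime_factorization_prime)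
  finally show ?thesis .
qed

lemma inj_on_prod_primes:
  assumes "finite N" "\<And>q. q \<in> N \<Longrightarrow> prime (q::nat)"
  shows "inj_on (\<lambda>T. \<Prod>T) (Pow N)"
proof (rule inj_onI)
  fix S T assume "S \<in> Pow N" "T \<in> Pow N" "\<Prod>S = \<Prod>T"
  then show "S = T" using assms prime_factors_prod_primes[of S] prime_factors_prod_primes[of T]
    by (metis PowD finite_subset subsetD)
qed

lemma incl_excl_primes:
  fixes g :: "'a \<Rightarrow> nat"
  assumes "finite A" "finite N" "\<And>q. q \<in> N \<Longrightarrow> prime q"
  shows "real (card {a\<in>A. \<forall>q\<in>N. \<not> q dvd g a}) =
         (\<Sum>T\<in>Pow N. (-1) ^ card T * real (card {a\<in>A. \<Prod>T dvd g a}))"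
proof -
  have fT: "\<And>T. T \<in> Pow N \<Longrightarrow> finite T" using assms finite_subset by auto
  have "(\<Sum>T\<in>Pow N. (-1) ^ card T * real (card {a\<in>A. \<Prod>T dvd g a})) =
        (\<Sum>T\<in>Pow N. \<Sum>a\<in>A. if \<Prod>T dvd g a then (-1) ^ card T else 0)"
  proof (rule sum.cong[OF refl])
    fix T
    show "(-1) ^ card T * real (card {a\<in>A. \<Prod>T dvd g a}) = (\<Sum>a\<in>A. if \<Prod>T dvd g a then (-1) ^ card T else 0)"
      using assms by (simp add: sum.inter_filter[symmetric] mult.commute)
  qed
  also have "\<dots> = (\<Sum>a\<in>A. \<Sum>T\<in>Pow N. if \<Prod>T dvd g a then (-1) ^ card T else 0)"
    by (rule sum.swap)
  also have "\<dots> = (\<Sum>a\<in>A. if (\<forall>q\<in>N. \<not> q dvd g a) then 1 else 0)"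
  proof (rule sum.cong[OF refl])
    fix a
    have "(\<Sum>T\<in>Pow N. if \<Prod>T dvd g a then (-1::real) ^ card T else 0) =
          (\<Sum>T\<in>Pow N. if T \<subseteq> {q. q dvd g a} then (-1::real) ^ card T else 0)"
    proof (rule sum.cong[OF refl])
      fix T assume "T \<in> Pow N"
      then have "\<Prod>T dvd g a \<longleftrightarrow> (\<forall>q\<in>T. q dvd g a)"
        using fT assms by (intro prod_primes_dvd_iff) auto
      then show "(if \<Prod>T dvd g a then (-1::real) ^ card T else 0) = (if T \<subseteq> {q. q dvd g a} then (-1::real) ^ card T else 0)"
        by auto
    qed
    also have "\<dots> = (\<Sum>T\<in>{T\<in>Pow N. T \<subseteq> {q. q dvd g a}}. (-1::real) ^ card T)"
      by (rule sum.inter_filter[symmetric]) (simp add: assms(2))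
    also have "{T\<in>Pow N. T \<subseteq> {q. q dvd g a}} = Pow (N \<inter> {q. q dvd g a})" by auto
    also have "(\<Sum>T\<in>Pow (N \<inter> {q. q dvd g a}). (-1::real) ^ card T) = (if N \<inter> {q. q dvd g a} = {} then 1 else 0)"
      using assms by (intro sum_Pow_alt) auto
    finally show "(\<Sum>T\<in>Pow N. if \<Prod>T dvd g a then (-1::real) ^ card T else 0) = (if (\<forall>q\<in>N. \<not> q dvd g a) then 1 else 0)"
      by auto
  qed
  also have "\<dots> = real (card {a\<in>A. \<forall>q\<in>N. \<not> q dvd g a})"
    using assms by (simp add: sum.inter_filter[symmetric])
  finally show ?thesis by simp
qed

lemma harm_upper:
  assumes "M \<ge> 1"
  shows "(\<Sum>d\<in>{1..M}. 1 / real d) \<le> 1 + ln (real M)"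
  using assms
proof (induction M rule: dec_induct)
  case base then show ?case by simp
next
  case (step n)
  have "ln (real n / real (Suc n)) \<le> real n / real (Suc n) - 1"
    using step by (intro ln_le_minus_one) auto
  also have "\<dots> = - 1 / real (Suc n)" by (simp add: field_simps)
  finally have "1 / real (Suc n) \<le> ln (real (Suc n)) - ln (real n)"
    using step by (simp add: ln_div)
  then show ?case using step by simp
qed


lemma sum_ln_pow_eq:
  "(\<Sum>m\<in>{1..M}. ln (real m) ^ k) = (\<Sum>e\<in>{1..M}. LK k e * real (M div e))"
proof -
  have "(\<Sum>m\<in>{1..M}. ln (real m) ^ k) = (\<Sum>m\<in>{1..M}. \<Sum>e\<in>{1..M}. if e dvd m then LK k e else 0)"
  proof (rule sum.cong[OF refl])
    fix m assume m: "m \<in> {1..M}"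
    have "ln (real m) ^ k = (\<Sum>d | d dvd m. LK k d)" using m LK_sum[of m k] by simp
    also have "\<dots> = (\<Sum>e\<in>{1..M}. if e dvd m then LK k e else 0)"
      using m by (intro divisor_sum_as_if) (auto dest: dvd_imp_le intro: Suc_leI)
    finally show "ln (real m) ^ k = (\<Sum>e\<in>{1..M}. if e dvd m then LK k e else 0)" .
  qed
  also have "\<dots> = (\<Sum>e\<in>{1..M}. LK k e * real (card {m\<in>{1..M}. e dvd id m}))"
    using sum_if_dvd_swap[of "{1..M}" "{1..M}" id "LK k"] by simp
  also have "\<dots> = (\<Sum>e\<in>{1..M}. LK k e * real (M div e))"
  proof (rule sum.cong[OF refl])
    fix e assume "e \<in> {1..M}"
    then have "card {m\<in>{1..M}. e dvd m} = M div e" by (intro card_multiples) auto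
    then show "LK k e * real (card {m\<in>{1..M}. e dvd id m}) = LK k e * real (M div e)" by simp
  qed
  finally show ?thesis .
qed

lemma W_lower:
  "(\<Sum>m\<in>{1..M}. ln (real m) ^ k) \<le> real M * (\<Sum>e\<in>{1..M}. LK k e / real e)"
proof -
  have "(\<Sum>e\<in>{1..M}. LK k e * real (M div e)) \<le> (\<Sum>e\<in>{1..M}. LK k e * (real M / real e))"
  proof (intro sum_mono mult_left_mono LK_nonneg)
    fix e assume "e \<in> {1..M}"
    show "real (M div e) \<le> real M / real e"
      by (rule of_nat_div_le_of_nat)
  qed
  also have "\<dots> = real M * (\<Sum>e\<in>{1..M}. LK k e / real e)"
    unfolding sum_distrib_left by (rule sum.cong[OF refl]) (simp add: field_simps)
  finally show ?thesis using sum_ln_pow_eq by simp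
qed

lemma W_upper:
  "real M * (\<Sum>e\<in>{1..M}. LK k e / real e) \<le> 2 * real M * ln (real M) ^ k"
proof -
  have "real M * (\<Sum>e\<in>{1..M}. LK k e / real e) = (\<Sum>e\<in>{1..M}. LK k e * (real M / real e))"
    unfolding sum_distrib_left by (rule sum.cong[OF refl]) (simp add: field_simps)
  also have "\<dots> \<le> (\<Sum>e\<in>{1..M}. LK k e * (real (M div e) + 1))"
  proof (intro sum_mono mult_left_mono LK_nonneg)
    fix e assume e: "e \<in> {1..M}"
    have eq: "M = M div e * e + M mod e" by simp
    have "M mod e < e" using e by simp
    then have "M \<le> M div e * e + e" using eq by linarith
    then have "real M \<le> real (M div e * e + e)" by (simp only: of_nat_le_iff)
    then have "real M \<le> real (M div e) * real e + real e" by simp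
    then show "real M / real e \<le> real (M div e) + 1" using e by (simp add: field_simps)
  qed
  also have "\<dots> = (\<Sum>e\<in>{1..M}. LK k e * real (M div e)) + (\<Sum>e\<in>{1..M}. LK k e)"
    by (simp add: algebra_simps sum.distrib)
  also have "(\<Sum>e\<in>{1..M}. LK k e * real (M div e)) = (\<Sum>m\<in>{1..M}. ln (real m) ^ k)"
    by (rule sum_ln_pow_eq[symmetric])
  also have "\<dots> \<le> (\<Sum>m\<in>{1..M}. ln (real M) ^ k)"
    by (intro sum_mono power_mono) auto
  also have "(\<Sum>e\<in>{1..M}. LK k e) \<le> (\<Sum>e\<in>{1..M}. ln (real M) ^ k)"
  proof (intro sum_mono)
    fix e assume e: "e \<in> {1..M}"
    have "LK k e \<le> ln (real e) ^ k" using e by (intro LK_le) auto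
    also have "\<dots> \<le> ln (real M) ^ k" using e by (intro power_mono) auto
    finally show "LK k e \<le> ln (real M) ^ k" .
  qed
  finally show ?thesis by simp
qed

lemma card_large_part:
  fixes R :: real
  assumes "R \<ge> 1"
  shows "real (card {m\<in>{1..M}. real M / R < real m}) \<ge> real M - real M / R"
proof -
  define F where "F = nat \<lfloor>real M / R\<rfloor>"
  have F_le: "real F \<le> real M / R" unfolding F_def using assms
    by (simp add: of_nat_floor)
  have "{F+1..M} \<subseteq> {m\<in>{1..M}. real M / R < real m}"
  proof
    fix m assume "m \<in> {F+1..M}"
    then have "m \<ge> F + 1" "m \<le> M" by auto
    moreover have "real M / R < real F + 1"
    proof -
      have nn: "real M / R \<ge> 0" using assms by simp
      have "real F = real_of_int \<lfloor>real M / R\<rfloor>" unfolding F_def using nn by simp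
      then show ?thesis using real_of_int_floor_add_one_gt[of "real M / R"] by linarith
    qed
    ultimately show "m \<in> {m\<in>{1..M}. real M / R < real m}" by auto
  qed
  then have "card {F+1..M} \<le> card {m\<in>{1..M}. real M / R < real m}"
    by (intro card_mono) auto
  then have "real (card {F+1..M}) \<le> real (card {m\<in>{1..M}. real M / R < real m})"
    by linarith
  moreover have "real (card {F+1..M}) \<ge> real M - real F" by simp
  ultimately show ?thesis using F_le by linarith
qed

lemma sum_ln_pow_lower:
  fixes R :: real
  assumes R: "R \<ge> 1" and MR: "real M \<ge> R" and lnM: "R * ln R \<le> ln (real M)"
  shows "(\<Sum>m\<in>{1..M}. ln (real m) ^ k) \<ge> (1 - 1/R) ^ (k+1) * real M * ln (real M) ^ k"
proof -
  have Mpos: "real M > 0" using R MR by linarith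
  have lnR: "ln R \<ge> 0" using R by simp
  have lnM0: "ln (real M) \<ge> 0" using Mpos by simp
  have key: "ln (real M) - ln R \<ge> (1 - 1/R) * ln (real M)"
  proof -
    have "ln R \<le> ln (real M) / R" using lnM R by (simp add: pos_le_divide_eq mult.commute)
    moreover have "(1 - 1/R) * ln (real M) = ln (real M) - ln (real M) / R" by (simp add: left_diff_distrib)
    ultimately show ?thesis by linarith
  qed
  have "1/R \<le> 1" using R by simp
  then have base: "(1 - 1/R) * ln (real M) \<ge> 0" using lnM0 by (intro mult_nonneg_nonneg) auto
  have "(\<Sum>m\<in>{1..M}. ln (real m) ^ k) \<ge>
        (\<Sum>m\<in>{1..M}. if real M / R < real m then (ln (real M) - ln R) ^ k else 0)"
  proof (intro sum_mono)
    fix m assume m: "m \<in> {1..M}"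
    show "(if real M / R < real m then (ln (real M) - ln R) ^ k else 0) \<le> ln (real m) ^ k"
    proof (cases "real M / R < real m")
      case True
      have "ln (real M) - ln R = ln (real M / R)" using Mpos R by (simp add: ln_div)
      also have "\<dots> \<le> ln (real m)" using True Mpos R m by (subst ln_le_cancel_iff) auto
      finally have "ln (real M) - ln R \<le> ln (real m)" .
      moreover have "ln (real M) - ln R \<ge> 0" using key base by linarith
      ultimately show ?thesis using True by (simp add: power_mono)
    next
      case False then show ?thesis using m by simp
    qed
  qed
  also have "(\<Sum>m\<in>{1..M}. if real M / R < real m then (ln (real M) - ln R) ^ k else 0) =
        real (card {m\<in>{1..M}. real M / R < real m}) * (ln (real M) - ln R) ^ k"
    by (simp add: sum.inter_filter[symmetric])
  finally have s1: "(\<Sum>m\<in>{1..M}. ln (real m) ^ k) \<ge> real (card {m\<in>{1..M}. real M / R < real m}) * (ln (real M) - ln R) ^ k" .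
  have "real (card {m\<in>{1..M}. real M / R < real m}) * (ln (real M) - ln R) ^ k \<ge>
        ((1 - 1/R) * real M) * ((1 - 1/R) * ln (real M)) ^ k"
  proof (intro mult_mono power_mono key base)
    show "(1 - 1 / R) * real M \<le> real (card {m \<in> {1..M}. real M / R < real m})"
      using card_large_part[OF R, of M] by (simp add: algebra_simps)
    show "0 \<le> real (card {m \<in> {1..M}. real M / R < real m})" by simp
    show "0 \<le> ((1 - 1 / R) * ln (real M)) ^ k" using base by simp
  qed
  also have "((1 - 1/R) * real M) * ((1 - 1/R) * ln (real M)) ^ k = (1 - 1/R) ^ (k+1) * real M * ln (real M) ^ k"
    by (simp add: power_mult_distrib mult_ac)
  finally show ?thesis using s1 by linarith
qed


declare LK.simps(2)[simp del]

definition Smooth :: "real \<Rightarrow> real \<Rightarrow> nat set" where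
  "Smooth z t = {n. 1 \<le> n \<and> real n \<le> t \<and> (\<forall>p. prime p \<longrightarrow> p dvd n \<longrightarrow> real p \<le> z)}"

definition Dz :: "real \<Rightarrow> nat set" where
  "Dz z = {d\<in>{1..nat \<lfloor>z\<rfloor>}. z powr (1/8) < real d}"

lemma Smooth_sub: "Smooth z t \<subseteq> {1..nat \<lfloor>t\<rfloor>}"
  unfolding Smooth_def by (auto intro: le_nat_floor)

lemma finite_Smooth [simp]: "finite (Smooth z t)"
  using Smooth_sub finite_subset by blast

lemma le_nat_floor_real:
  assumes "n \<le> nat \<lfloor>t\<rfloor>" "t \<ge> 0"
  shows "real n \<le> t"
proof -
  have "real n \<le> real (nat \<lfloor>t\<rfloor>)" using assms(1) by (simp only: of_nat_le_iff)
  also have "\<dots> \<le> t" using assms by (simp add: of_nat_floor)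
  finally show ?thesis .
qed

lemma nat_floor_half:
  assumes "t \<ge> (1::real)"
  shows "real (nat \<lfloor>t\<rfloor>) \<ge> t / 2"
proof -
  have "real (nat \<lfloor>t\<rfloor>) = real_of_int \<lfloor>t\<rfloor>" using assms by simp
  moreover have "real_of_int \<lfloor>t\<rfloor> > t - 1" using real_of_int_floor_add_one_gt[of t] by linarith
  moreover have "real_of_int \<lfloor>t\<rfloor> \<ge> 1" using assms by simp
  ultimately show ?thesis by linarith
qed

lemma Smooth_small:
  assumes "1 \<le> t" "t \<le> z"
  shows "real (card (Smooth z t)) \<ge> t / 2"
proof -
  have "{1..nat \<lfloor>t\<rfloor>} \<subseteq> Smooth z t"
  proof
    fix n assume n: "n \<in> {1..nat \<lfloor>t\<rfloor>}"
    then have nt: "real n \<le> t" using assms by (intro le_nat_floor_real) auto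
    have "\<And>p. prime p \<Longrightarrow> p dvd n \<Longrightarrow> real p \<le> z"
    proof -
      fix p assume "prime p" "p dvd n"
      then have "p \<le> n" using n by (intro dvd_imp_le) auto
      then show "real p \<le> z" using nt assms by linarith
    qed
    then show "n \<in> Smooth z t" using n nt unfolding Smooth_def by auto
  qed
  then have "card {1..nat \<lfloor>t\<rfloor>} \<le> card (Smooth z t)" by (intro card_mono) auto
  then have "real (nat \<lfloor>t\<rfloor>) \<le> real (card (Smooth z t))" by simp
  then show ?thesis using nat_floor_half[OF assms(1)] by linarith
qed

lemma Dz_props:
  assumes "d \<in> Dz z" "z \<ge> 1"
  shows "d \<ge> 1" "real d \<le> z" "real d > z powr (1/8)"
  using assms unfolding Dz_def by (auto intro: le_nat_floor_real)

lemma Smooth_mult_card: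
  assumes "d \<in> Dz z" "z \<ge> 1"
  shows "card (Smooth z (t / real d)) \<le> card {n\<in>Smooth z t. d dvd id n}"
proof -
  note d = Dz_props[OF assms]
  have "(\<lambda>m. d * m) ` Smooth z (t / real d) \<subseteq> {n\<in>Smooth z t. d dvd id n}"
  proof
    fix n assume "n \<in> (\<lambda>m. d * m) ` Smooth z (t / real d)"
    then obtain m where m: "n = d * m" "m \<in> Smooth z (t / real d)" by (rule imageE)
    then have m1: "1 \<le> m" "real m \<le> t / real d" "\<And>p. prime p \<Longrightarrow> p dvd m \<Longrightarrow> real p \<le> z"
      unfolding Smooth_def by auto
    have "real d * real m \<le> t" using m1(2) d(1) by (simp add: field_simps)
    then have "real n \<le> t" using m by simp
    moreover have "1 \<le> n" using m m1 d by simp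
    moreover have "real p \<le> z" if "prime p" "p dvd n" for p
    proof -
      from that m have "p dvd d \<or> p dvd m" by (simp add: prime_dvd_mult_iff)
      then show ?thesis
      proof
        assume "p dvd d"
        then have "p \<le> d" using d by (intro dvd_imp_le) auto
        then show ?thesis using d by linarith
      next
        assume "p dvd m" then show ?thesis using m1 that by auto
      qed
    qed
    ultimately show "n \<in> {n\<in>Smooth z t. d dvd id n}" using m unfolding Smooth_def by auto
  qed
  moreover have "inj_on (\<lambda>m. d * m) (Smooth z (t / real d))" using d by (auto simp: inj_on_def)
  ultimately show ?thesis
    by (metis (no_types, lifting) card_image card_mono finite_Smooth finite_subset mem_Collect_eq subsetI
        finite_Collect_conjI)
qed

lemma H1:
  assumes "t \<ge> 1" "z \<ge> 1"
  shows "real (card (Smooth z t)) * ln t \<ge> (\<Sum>d\<in>Dz z. LK 1 d * real (card (Smooth z (t / real d))))"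
proof -
  define S where "S = Smooth z t"
  have finDz: "finite (Dz z)" unfolding Dz_def by simp
  have "(\<Sum>d\<in>Dz z. LK 1 d * real (card (Smooth z (t / real d)))) \<le>
        (\<Sum>d\<in>Dz z. LK 1 d * real (card {n\<in>S. d dvd id n}))"
    unfolding S_def using assms Smooth_mult_card by (intro sum_mono mult_left_mono LK_nonneg) auto
  also have "\<dots> = (\<Sum>n\<in>S. \<Sum>d\<in>Dz z. if d dvd id n then LK 1 d else 0)"
    using sum_if_dvd_swap[of S "Dz z" id "LK 1"] finDz unfolding S_def by simp
  also have "\<dots> \<le> (\<Sum>n\<in>S. ln (real n))"
  proof (intro sum_mono)
    fix n assume n: "n \<in> S"
    then have npos: "n > 0" unfolding S_def Smooth_def by auto
    have "(\<Sum>d\<in>Dz z. if d dvd id n then LK 1 d else 0) = (\<Sum>d\<in>{d\<in>Dz z. d dvd n}. LK 1 d)"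
      by (simp only: id_apply sum.inter_filter[OF finDz])
    also have "\<dots> \<le> (\<Sum>d | d dvd n. LK 1 d)"
      using npos by (intro sum_mono2) (auto simp: LK_nonneg)
    also have "\<dots> = ln (real n)" using LK_sum[OF npos, of 1] by simp
    finally show "(\<Sum>d\<in>Dz z. if d dvd id n then LK 1 d else 0) \<le> ln (real n)" .
  qed
  also have "\<dots> \<le> (\<Sum>n\<in>S. ln t)"
  proof (intro sum_mono)
    fix n assume n: "n \<in> S"
    then have "1 \<le> n" "real n \<le> t" unfolding S_def Smooth_def by auto
    then show "ln (real n) \<le> ln t" by simp
  qed
  also have "\<dots> = real (card S) * ln t" by simp
  finally show ?thesis unfolding S_def .
qed

lemma H2:
  assumes zpos: "z > 0" and lz: "ln z \<ge> 70"
  shows "(\<Sum>d\<in>Dz z. LK 1 d / real d) \<ge> ln z / 2"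
proof -
  have "z \<ge> exp 70" using lz zpos by (simp add: ln_ge_iff)
  moreover have "exp (70::real) \<ge> 1 + 70" by (rule exp_ge_add_one_self)
  ultimately have z71: "z \<ge> 71" by linarith
  define Mz where "Mz = nat \<lfloor>z\<rfloor>"
  define M8 where "M8 = nat \<lfloor>z powr (1/8)\<rfloor>"
  have z8: "z powr (1/8) \<ge> 1" using z71 by (intro ge_one_powr_ge_zero) auto
  have z8le: "z powr (1/8) \<le> z" using z71 powr_mono[of "1/8" 1 z] by simp
  have M8le: "M8 \<le> Mz" unfolding M8_def Mz_def using z8le by (intro nat_mono floor_mono)
  have M8ge: "M8 \<ge> 1" unfolding M8_def using z8 by (simp add: le_nat_floor)
  have Dz_eq: "Dz z = {1..Mz} - {1..M8}"
  proof (rule Set.set_eqI)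
    fix d
    have "d \<le> M8 \<longleftrightarrow> real d \<le> z powr (1/8)"
      unfolding M8_def using z8 by (auto intro: le_nat_floor le_nat_floor_real)
    then show "d \<in> Dz z \<longleftrightarrow> d \<in> {1..Mz} - {1..M8}"
      unfolding Dz_def Mz_def by auto
  qed
  have sdiff: "(\<Sum>d\<in>Dz z. LK 1 d / real d) = (\<Sum>d\<in>{1..Mz}. LK 1 d / real d) - (\<Sum>d\<in>{1..M8}. LK 1 d / real d)"
    unfolding Dz_eq using M8le by (intro sum_diff) auto
  have Mzh: "real Mz \<ge> z / 2" unfolding Mz_def using nat_floor_half[of z] z71 by simp
  then have Mz16: "real Mz \<ge> 16" using z71 by linarith
  have ln2: "ln (2::real) < 1" by (rule ln_2_less_1)
  have ln2p: "ln (2::real) > 0" by simp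
  have lnMz: "ln (real Mz) \<ge> ln z - ln 2"
  proof -
    have "ln (z / 2) \<le> ln (real Mz)" using Mzh zpos by (subst ln_le_cancel_iff) auto
    then show ?thesis using zpos by (simp add: ln_div)
  qed
  have ln16: "ln (16::real) = 4 * ln 2"
  proof -
    have "ln ((2::real) ^ 4) = real 4 * ln 2" using ln_realpow[of "2::real" 4] by simp
    moreover have "(2::real) ^ 4 = 16" by simp
    ultimately show ?thesis by simp
  qed
  have cond: "16 * ln (16::real) \<le> ln (real Mz)" using lnMz ln16 ln2 lz by linarith
  have c225: "(1 - 1/16::real) ^ (1+1) = 225/256" by simp
  have low1: "(\<Sum>m\<in>{1..Mz}. ln (real m) ^ 1) \<ge> (225/256) * real Mz * ln (real Mz) ^ 1"
    using sum_ln_pow_lower[of 16 Mz 1] Mz16 cond unfolding c225 by simp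
  have low2: "(\<Sum>m\<in>{1..Mz}. ln (real m) ^ 1) \<le> real Mz * (\<Sum>e\<in>{1..Mz}. LK 1 e / real e)"
    by (rule W_lower)
  have A: "(\<Sum>e\<in>{1..Mz}. LK 1 e / real e) \<ge> (225/256) * ln (real Mz)"
  proof -
    have "real Mz * ((225/256) * ln (real Mz)) \<le> real Mz * (\<Sum>e\<in>{1..Mz}. LK 1 e / real e)"
      using low1 low2 by (simp add: algebra_simps)
    then show ?thesis using Mz16 by (simp add: mult_le_cancel_left)
  qed
  have B: "(\<Sum>e\<in>{1..M8}. LK 1 e / real e) \<le> ln z / 4"
  proof -
    have "real M8 * (\<Sum>e\<in>{1..M8}. LK 1 e / real e) \<le> real M8 * (2 * ln (real M8))"
      using W_upper[of M8 1] by simp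
    then have "(\<Sum>e\<in>{1..M8}. LK 1 e / real e) \<le> 2 * ln (real M8)"
      using M8ge by (simp add: mult_le_cancel_left)
    also have "ln (real M8) \<le> ln (z powr (1/8))"
      unfolding M8_def using M8ge M8_def z8 by (subst ln_le_cancel_iff) (auto intro: le_nat_floor_real)
    also have "\<dots> = ln z / 8" using zpos by (simp add: ln_powr)
    finally show ?thesis by simp
  qed
  have "(225/256) * (ln z - ln 2) = (225/256) * ln z - (225/256) * ln 2" by (simp add: right_diff_distrib)
  then have "(225/256) * (ln z - ln 2) - ln z / 4 \<ge> ln z / 2" using ln2 lz by linarith
  moreover have "225/256 * (ln z - ln 2) \<le> 225/256 * ln (real Mz)" using lnMz by (intro mult_left_mono) auto
  ultimately show ?thesis using sdiff A B by linarith
qed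

fun cS :: "nat \<Rightarrow> real" where
  "cS 0 = 1/2"
| "cS (Suc j) = cS j / (real j + 9)"

lemma cS_pos: "cS j > 0"
  by (induction j) auto

lemma cS_Suc_le: "cS (Suc j) \<le> cS j"
  using cS_pos[of j] by (simp add: divide_le_eq)

lemma H3:
  assumes zpos: "z > 0" and lz: "ln z \<ge> 70"
  shows "1 \<le> t \<Longrightarrow> t \<le> z powr ((real j + 8) / 8) \<Longrightarrow> real (card (Smooth z t)) \<ge> cS j * t"
proof (induction j arbitrary: t)
  case 0
  then have "t \<le> z" using zpos by simp
  then show ?case using Smooth_small[OF 0(1)] by simp
next
  case (Suc j)
  have "z \<ge> exp 70" using lz zpos by (simp add: ln_ge_iff)
  moreover have "exp (70::real) \<ge> 1 + 70" by (rule exp_ge_add_one_self)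
  ultimately have z1: "z \<ge> 1" by linarith
  show ?case
  proof (cases "t \<le> z powr ((real j + 8) / 8)")
    case True
    have "cS (Suc j) * t \<le> cS j * t" using cS_Suc_le Suc.prems by (intro mult_right_mono) auto
    then show ?thesis using Suc.IH[OF Suc.prems(1) True] by linarith
  next
    case False
    have "z = z powr 1" using zpos by simp
    also have "\<dots> \<le> z powr ((real j + 8) / 8)" using z1 by (intro powr_mono) auto
    finally have tz: "t > z" using False by linarith
    have tpos: "t > 0" using Suc.prems by linarith
    have IHd: "real (card (Smooth z (t / real d))) \<ge> cS j * (t / real d)" if d: "d \<in> Dz z" for d
    proof -
      note dp = Dz_props[OF d z1]
      have dpos: "real d > 0" using dp by simp
      have "1 \<le> t / real d" using dp tz dpos by (simp add: field_simps)
      moreover have "t / real d \<le> z powr ((real j + 8) / 8)"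
      proof -
        have "t / real d \<le> t / z powr (1/8)" using dp tpos by (intro divide_left_mono) auto
        also have "\<dots> \<le> z powr ((real (Suc j) + 8) / 8) / z powr (1/8)"
          using Suc.prems by (intro divide_right_mono) auto
        also have "\<dots> = z powr ((real (Suc j) + 8) / 8 - 1/8)" using zpos by (simp add: powr_diff)
        also have "(real (Suc j) + 8) / 8 - 1/8 = (real j + 8) / 8" by simp
        finally show ?thesis .
      qed
      ultimately show ?thesis using Suc.IH by blast
    qed
    have "(\<Sum>d\<in>Dz z. LK 1 d * real (card (Smooth z (t / real d)))) \<ge>
          (\<Sum>d\<in>Dz z. LK 1 d * (cS j * (t / real d)))"
      using IHd by (intro sum_mono mult_left_mono LK_nonneg) auto
    also have "(\<Sum>d\<in>Dz z. LK 1 d * (cS j * (t / real d))) = cS j * t * (\<Sum>d\<in>Dz z. LK 1 d / real d)"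
      unfolding sum_distrib_left by (rule sum.cong[OF refl]) (simp add: field_simps)
    finally have s1: "real (card (Smooth z t)) * ln t \<ge> cS j * t * (\<Sum>d\<in>Dz z. LK 1 d / real d)"
      using H1[OF Suc.prems(1) z1] by linarith
    have "cS j * t * (\<Sum>d\<in>Dz z. LK 1 d / real d) \<ge> cS j * t * (ln z / 2)"
      using H2[OF zpos lz] cS_pos[of j] tpos by (intro mult_left_mono) auto
    with s1 have s2: "real (card (Smooth z t)) * ln t \<ge> cS j * t * (ln z / 2)" by linarith
    have lnt: "ln t \<le> (real j + 9) / 8 * ln z"
    proof -
      have "ln t \<le> ln (z powr ((real (Suc j) + 8) / 8))" using Suc.prems tpos zpos
        by (subst ln_le_cancel_iff) auto
      also have "\<dots> = (real j + 9) / 8 * ln z" using zpos by (simp add: ln_powr add.commute)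
      finally show ?thesis .
    qed
    have lntpos: "ln t > 0" using tz z1 by simp
    have "cS j * t * (ln z / 2) \<ge> cS (Suc j) * t * ln t"
    proof -
      have cp: "cS (Suc j) * t \<ge> 0"
        by (rule mult_nonneg_nonneg[OF less_imp_le[OF cS_pos] less_imp_le[OF tpos]])
      have "cS (Suc j) * t * ln t \<le> cS (Suc j) * t * ((real j + 9) / 8 * ln z)"
        using lnt cp by (intro mult_left_mono) auto
      also have "\<dots> = cS j * t * (ln z / 8)" by (simp add: field_simps)
      also have "\<dots> \<le> cS j * t * (ln z / 2)" using cS_pos[of j] tpos lz
        by (intro mult_left_mono) auto
      finally show ?thesis .
    qed
    with s2 have "real (card (Smooth z t)) * ln t \<ge> cS (Suc j) * t * ln t" by linarith
    then show ?thesis by (rule mult_right_le_imp_le[OF _ lntpos])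
  qed
qed


definition Nset :: "real \<Rightarrow> nat set \<Rightarrow> nat set" where
  "Nset x P = {q. prime q \<and> real q \<le> x \<and> q \<notin> P}"

definition Prs :: "real \<Rightarrow> nat set" where
  "Prs x = {p. prime p \<and> real p \<le> x}"

lemma finite_Prs [simp]: "finite (Prs x)"
proof -
  have "Prs x \<subseteq> {..nat \<lfloor>x\<rfloor>}" unfolding Prs_def by (auto intro: le_nat_floor)
  then show ?thesis by (rule finite_subset) simp
qed

lemma finite_Nset [simp]: "finite (Nset x P)"
proof -
  have "Nset x P \<subseteq> Prs x" unfolding Prs_def Nset_def by auto
  then show ?thesis by (rule finite_subset) (rule finite_Prs)
qed

lemma prime_pi_eq: "prime_pi x = card (Prs x)"
  unfolding prime_pi_def Prs_def by simp

lemma prime_pi_ap_eq: "prime_pi_ap x d = card {p\<in>Prs x. d dvd (p - 1)}"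
proof -
  have "{p::nat. prime p \<and> real p \<le> x \<and> [p = 1] (mod d)} = {p\<in>Prs x. d dvd (p - 1)}"
  proof (rule Set.set_eqI)
    fix p
    show "p \<in> {p::nat. prime p \<and> real p \<le> x \<and> [p = 1] (mod d)} \<longleftrightarrow> p \<in> {p\<in>Prs x. d dvd (p - 1)}"
    proof (cases "prime p")
      case True
      then have "p \<ge> 1" using prime_ge_1_nat by blast
      then have "[p = 1] (mod d) \<longleftrightarrow> d dvd (p - 1)" by (rule cong_altdef_nat)
      then show ?thesis unfolding Prs_def using True by auto
    next
      case False then show ?thesis unfolding Prs_def by auto
    qed
  qed
  then show ?thesis unfolding prime_pi_ap_def by simp
qed

lemma prime_pi_set_eq: "prime_pi_set x P = card {p\<in>Prs x. \<forall>q\<in>Nset x P. \<not> q dvd (p - 1)}"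
proof -
  have "{p::nat. prime p \<and> real p \<le> x \<and> (\<forall>q. prime q \<longrightarrow> q dvd (p - 1) \<longrightarrow> q \<in> P)} =
        {p\<in>Prs x. \<forall>q\<in>Nset x P. \<not> q dvd (p - 1)}"
  proof (rule Set.set_eqI)
    fix p
    show "p \<in> {p::nat. prime p \<and> real p \<le> x \<and> (\<forall>q. prime q \<longrightarrow> q dvd (p - 1) \<longrightarrow> q \<in> P)} \<longleftrightarrow>
          p \<in> {p\<in>Prs x. \<forall>q\<in>Nset x P. \<not> q dvd (p - 1)}"
    proof (cases "prime p \<and> real p \<le> x")
      case True
      then have p2: "p \<ge> 2" using prime_ge_2_nat by blast
      have "(\<forall>q. prime q \<longrightarrow> q dvd (p - 1) \<longrightarrow> q \<in> P) \<longleftrightarrow> (\<forall>q\<in>Nset x P. \<not> q dvd (p - 1))"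
      proof
        assume H: "\<forall>q. prime q \<longrightarrow> q dvd (p - 1) \<longrightarrow> q \<in> P"
        show "\<forall>q\<in>Nset x P. \<not> q dvd (p - 1)" using H unfolding Nset_def by auto
      next
        assume H: "\<forall>q\<in>Nset x P. \<not> q dvd (p - 1)"
        show "\<forall>q. prime q \<longrightarrow> q dvd (p - 1) \<longrightarrow> q \<in> P"
        proof (intro allI impI)
          fix q assume q: "prime q" "q dvd (p - 1)"
          then have "q \<le> p - 1" using p2 by (intro dvd_imp_le) auto
          then have "real q \<le> x" using True p2 by linarith
          then show "q \<in> P" using H q unfolding Nset_def by auto
        qed
      qed
      then show ?thesis unfolding Prs_def using True by auto
    next
      case False then show ?thesis unfolding Prs_def by auto
    qed
  qed
  then show ?thesis unfolding prime_pi_set_def by simp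
qed

lemma Psi_set_eq:
  assumes "x \<ge> 0"
  shows "Psi_set x P = card {n\<in>{1..nat \<lfloor>x\<rfloor>}. \<forall>q\<in>Nset x P. \<not> q dvd n}"
proof -
  have "{n::nat. 1 \<le> n \<and> real n \<le> x \<and> (\<forall>p. prime p \<longrightarrow> p dvd n \<longrightarrow> p \<in> P)} =
        {n\<in>{1..nat \<lfloor>x\<rfloor>}. \<forall>q\<in>Nset x P. \<not> q dvd n}"
  proof (rule Set.set_eqI)
    fix n
    show "n \<in> {n::nat. 1 \<le> n \<and> real n \<le> x \<and> (\<forall>p. prime p \<longrightarrow> p dvd n \<longrightarrow> p \<in> P)} \<longleftrightarrow>
          n \<in> {n\<in>{1..nat \<lfloor>x\<rfloor>}. \<forall>q\<in>Nset x P. \<not> q dvd n}"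
    proof (cases "1 \<le> n \<and> real n \<le> x")
      case True
      then have nin: "n \<in> {1..nat \<lfloor>x\<rfloor>}" by (auto intro: le_nat_floor)
      have "(\<forall>p. prime p \<longrightarrow> p dvd n \<longrightarrow> p \<in> P) \<longleftrightarrow> (\<forall>q\<in>Nset x P. \<not> q dvd n)"
      proof
        assume H: "\<forall>p. prime p \<longrightarrow> p dvd n \<longrightarrow> p \<in> P"
        show "\<forall>q\<in>Nset x P. \<not> q dvd n" using H unfolding Nset_def by auto
      next
        assume H: "\<forall>q\<in>Nset x P. \<not> q dvd n"
        show "\<forall>p. prime p \<longrightarrow> p dvd n \<longrightarrow> p \<in> P"
        proof (intro allI impI)
          fix q assume q: "prime q" "q dvd n"
          then have "q \<le> n" using True by (intro dvd_imp_le) auto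
          then have "real q \<le> x" using True by linarith
          then show "q \<in> P" using H q unfolding Nset_def by auto
        qed
      qed
      then show ?thesis using True nin by auto
    next
      case False
      have "n \<notin> {1..nat \<lfloor>x\<rfloor>}" using False assms by (auto intro: le_nat_floor_real)
      then show ?thesis using False by auto
    qed
  qed
  then show ?thesis unfolding Psi_set_def by simp
qed

lemma prod_one_minus_ge:
  fixes a :: "'a \<Rightarrow> real"
  assumes "finite A" "\<And>i. i \<in> A \<Longrightarrow> 0 \<le> a i \<and> a i \<le> 1"
  shows "(\<Prod>i\<in>A. 1 - a i) \<ge> 1 - (\<Sum>i\<in>A. a i)"
  using assms
proof (induction A rule: finite_induct)
  case empty then show ?case by simp
next
  case (insert j A)
  have IH: "(\<Prod>i\<in>A. 1 - a i) \<ge> 1 - (\<Sum>i\<in>A. a i)" using insert by auto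
  have aj: "0 \<le> a j" "a j \<le> 1" using insert by auto
  have S: "(\<Sum>i\<in>A. a i) \<ge> 0" using insert by (intro sum_nonneg) auto
  have "(1 - a j) * (\<Prod>i\<in>A. 1 - a i) \<ge> (1 - a j) * (1 - (\<Sum>i\<in>A. a i))"
    using IH aj by (intro mult_left_mono) auto
  moreover have "(1 - a j) * (1 - (\<Sum>i\<in>A. a i)) \<ge> 1 - (a j + (\<Sum>i\<in>A. a i))"
    using aj S by (simp add: algebra_simps)
  ultimately show ?case using insert by simp
qed

lemma totient_prod_primes:
  fixes T :: "nat set"
  assumes "finite T" "\<And>q. q \<in> T \<Longrightarrow> prime q"
  shows "real (totient (\<Prod>T)) = (\<Prod>q\<in>T. real q - 1)"
proof -
  have "totient (\<Prod>T) = totient (prod id T)" by simp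
  also have "\<dots> = (\<Prod>q\<in>T. totient (id q))"
  proof (rule totient_prod_coprime)
    show "pairwise coprime (id ` T)"
      using assms by (auto simp: pairwise_def primes_coprime)
    show "inj_on id T" by simp
  qed
  also have "\<dots> = (\<Prod>q\<in>T. q - 1)" using assms by (intro prod.cong) (auto simp: totient_prime)
  finally have "real (totient (\<Prod>T)) = real (\<Prod>q\<in>T. q - 1)" by simp
  also have "\<dots> = (\<Prod>q\<in>T. real (q - 1))" by simp
  also have "\<dots> = (\<Prod>q\<in>T. real q - 1)"
  proof (rule prod.cong[OF refl])
    fix q assume "q \<in> T"
    then have "q \<ge> 1" using assms(2) prime_ge_1_nat by blast
    then show "real (q - 1) = real q - 1" by (simp add: of_nat_diff)
  qed
  finally show ?thesis .
qed

lemma totient_diff_bound: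
  fixes T :: "nat set" and z K :: real
  assumes "finite T" "\<And>q. q \<in> T \<Longrightarrow> prime q" "\<And>q. q \<in> T \<Longrightarrow> real q > z"
    "real (card T) \<le> K" "z > 0" "2 * K \<le> z"
  shows "0 \<le> 1 / real (totient (\<Prod>T)) - 1 / real (\<Prod>T)"
    "1 / real (totient (\<Prod>T)) - 1 / real (\<Prod>T) \<le> 2 * K / (z * real (\<Prod>T))"
proof -
  define d where "d = real (\<Prod>T)"
  define f where "f = real (totient (\<Prod>T))"
  have dpos: "d > 0" unfolding d_def using assms(2) by (simp add: prime_gt_0_nat prod_pos)
  have dprod: "d = (\<Prod>q\<in>T. real q)" unfolding d_def by simp
  have fprod: "f = (\<Prod>q\<in>T. real q - 1)" unfolding f_def using totient_prod_primes[OF assms(1,2)] by simp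
  have qpos: "\<And>q. q \<in> T \<Longrightarrow> real q > 0" using assms(2) prime_gt_0_nat by auto
  have "(\<Prod>q\<in>T. real q - 1) = (\<Prod>q\<in>T. real q * (1 - 1 / real q))"
    using qpos by (intro prod.cong) (auto simp: field_simps)
  also have "\<dots> = d * (\<Prod>q\<in>T. 1 - 1 / real q)" unfolding dprod by (simp add: prod.distrib)
  finally have fd: "f = d * (\<Prod>q\<in>T. 1 - 1 / real q)" using fprod by simp
  have sumb: "(\<Sum>q\<in>T. 1 / real q) \<le> K / z"
  proof -
    have "(\<Sum>q\<in>T. 1 / real q) \<le> (\<Sum>q\<in>T. 1 / z)"
    proof (rule sum_mono)
      fix q assume "q \<in> T"
      then have "z \<le> real q" using assms(3) by (simp add: less_imp_le)
      then show "1 / real q \<le> 1 / z" using assms(5) by (intro divide_left_mono) auto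
    qed
    also have "\<dots> = real (card T) / z" by simp
    also have "\<dots> \<le> K / z" using assms by (intro divide_right_mono) auto
    finally show ?thesis .
  qed
  have pl: "(\<Prod>q\<in>T. 1 - 1 / real q) \<ge> 1 - K / z"
  proof -
    have "(\<Prod>q\<in>T. 1 - 1 / real q) \<ge> 1 - (\<Sum>q\<in>T. 1 / real q)"
    proof (rule prod_one_minus_ge[OF assms(1)])
      fix q assume q: "q \<in> T"
      then have "prime q" using assms(2) by blast
      then have "q \<ge> 1" by (rule prime_ge_1_nat)
      then have "real q \<ge> 1" by simp
      then show "0 \<le> 1 / real q \<and> 1 / real q \<le> 1" by simp
    qed
    then show ?thesis using sumb by linarith
  qed
  have pu: "(\<Prod>q\<in>T. 1 - 1 / real q) \<le> 1"
  proof (rule prod_le_1)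
    fix q assume q: "q \<in> T"
    then have "prime q" using assms(2) by blast
    then have "q \<ge> 1" by (rule prime_ge_1_nat)
    then have "real q \<ge> 1" by simp
    then show "0 \<le> 1 - 1 / real q \<and> 1 - 1 / real q \<le> 1" by simp
  qed
  have Kz: "K / z \<le> 1/2" using assms by (simp add: field_simps)
  have "d * (1/2) \<le> d * (\<Prod>q\<in>T. 1 - 1 / real q)"
    using pl Kz dpos by (intro mult_left_mono) auto
  then have fpos: "f \<ge> d / 2" using fd by simp
  have fle: "f \<le> d" using fd pu dpos by (simp add: mult_left_le)
  have fpos': "f > 0" using fpos dpos by linarith
  show "0 \<le> 1 / real (totient (\<Prod>T)) - 1 / real (\<Prod>T)"
    using fle fpos' unfolding f_def[symmetric] d_def[symmetric] by (simp add: frac_le)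
  have "d * (1 - K / z) \<le> d * (\<Prod>q\<in>T. 1 - 1 / real q)"
    using pl dpos by (intro mult_left_mono) auto
  then have "d - d * (K / z) \<le> f" using fd by (simp add: right_diff_distrib)
  then have dfK: "d - f \<le> d * (K / z)" by linarith
  have "1 / f - 1 / d = (d - f) / (d * f)" using fpos' dpos by (simp add: field_simps)
  also have "\<dots> \<le> (d * (K / z)) / (d * (d / 2))"
  proof (rule frac_le)
    show "0 \<le> d * (K / z)" using dpos assms by simp
    show "d - f \<le> d * (K / z)" by (rule dfK)
    show "0 < d * (d / 2)" using dpos by simp
    show "d * (d / 2) \<le> d * f" using fpos dpos by (intro mult_left_mono) auto
  qed
  also have "\<dots> = 2 * K / (z * d)" using dpos assms by (simp add: field_simps)
  finally show "1 / real (totient (\<Prod>T)) - 1 / real (\<Prod>T) \<le> 2 * K / (z * real (\<Prod>T))"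
    unfolding f_def[symmetric] d_def[symmetric] .
qed


declare LK.simps(2)[simp del]

locale fixx =
  fixes x U u \<epsilon> :: real and K :: nat and P :: "nat set"
  assumes x1: "x > 1" and u1: "1 \<le> u" and uU: "u \<le> U" and KU: "U \<le> real K"
    and eps0: "0 < \<epsilon>" and eps1: "\<epsilon> < 1"
    and Psmall: "{p. prime p \<and> real p \<le> x powr (1/u)} \<subseteq> P"
    and z0K: "2 * real K \<le> x powr (1/U)"
begin

definition "z0 = x powr (1/U)"
definition "N = Nset x P"
definition "M = nat \<lfloor>x powr (1 - \<epsilon>)\<rfloor>"
definition "Mx = nat \<lfloor>x\<rfloor>"
definition "Ts = {T\<in>Pow N. \<Prod>T \<le> M}"
definition "Tl = {T\<in>Pow N. \<not> \<Prod>T \<le> M}"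
definition "EH = (\<Sum>d\<in>{1..M}. \<bar>real (prime_pi_ap x d) - real (prime_pi x) / real (totient d)\<bar>)"
definition "W = (\<Sum>e\<in>{1..M}. LK K e / real e)"
definition "pp = real (prime_pi x)"

lemma U1: "U \<ge> 1" using u1 uU by linarith
lemma K1: "K \<ge> 1" using U1 KU by linarith

lemma z0_gt1: "z0 > 1"
  unfolding z0_def using x1 U1 by (intro gr_one_powr) auto

lemma lnz0: "ln z0 = ln x / U"
  unfolding z0_def using x1 by (simp add: ln_powr)

lemma N_big:
  assumes "q \<in> N"
  shows "prime q" "real q > z0" "real q \<le> x"
proof -
  from assms show "prime q" "real q \<le> x" unfolding N_def Nset_def by auto
  have "q \<notin> P" using assms unfolding N_def Nset_def by auto
  then have "\<not> real q \<le> x powr (1/u)" using Psmall \<open>prime q\<close> by auto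
  moreover have "x powr (1/U) \<le> x powr (1/u)"
    using x1 u1 uU by (intro powr_mono) (auto simp: field_simps)
  ultimately show "real q > z0" unfolding z0_def by linarith
qed

lemma finite_N [simp]: "finite N" unfolding N_def by simp

lemma PowN:
  assumes "T \<in> Pow N"
  shows "finite T" "\<And>q. q \<in> T \<Longrightarrow> prime q" "\<And>q. q \<in> T \<Longrightarrow> real q > z0"
  using assms N_big finite_subset[of T N] by auto

lemma prod_pos_T: "T \<in> Pow N \<Longrightarrow> \<Prod>T > 0"
  using PowN(2)[of T] by (simp add: prime_gt_0_nat prod_pos)

lemma card_S:
  assumes "n \<ge> 1" "real n \<le> x"
  shows "card (N \<inter> {q. q dvd n}) \<le> K"
proof -
  define S where "S = N \<inter> {q. q dvd n}"
  have finS: "finite S" unfolding S_def by simp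
  have Sp: "\<And>q. q \<in> S \<Longrightarrow> prime q" "\<And>q. q \<in> S \<Longrightarrow> real q > z0" unfolding S_def using N_big by auto
  have "\<Prod>S dvd n" using finS Sp unfolding S_def by (intro prod_primes_dvd) auto
  then have "\<Prod>S \<le> n" using assms by (intro dvd_imp_le) auto
  then have "real (\<Prod>S) \<le> x" using assms by linarith
  moreover have "z0 ^ card S \<le> real (\<Prod>S)"
  proof -
    have "z0 ^ card S = (\<Prod>q\<in>S. z0)" by simp
    also have "\<dots> \<le> (\<Prod>q\<in>S. real q)"
    proof (rule prod_mono)
      fix q assume "q \<in> S"
      then show "0 \<le> z0 \<and> z0 \<le> real q" using Sp(2)[of q] z0_gt1 by auto
    qed
    finally show ?thesis by simp
  qed
  ultimately have "z0 ^ card S \<le> x" by linarith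
  moreover have "z0 ^ card S = x powr (real (card S) / U)"
    unfolding z0_def using x1 by (simp add: powr_realpow[symmetric] powr_powr)
  ultimately have "x powr (real (card S) / U) \<le> x powr 1" using x1 by simp
  then have "real (card S) / U \<le> 1" using x1 by (simp only: powr_le_cancel_iff)
  then have "real (card S) \<le> U" using U1 by (simp add: divide_le_eq)
  then show ?thesis unfolding S_def using KU by linarith
qed

lemma card_T_le:
  assumes "T \<in> Pow N" "\<Prod>T dvd n" "n \<ge> 1" "real n \<le> x"
  shows "T \<subseteq> N \<inter> {q. q dvd n}" "card T \<le> K"
proof -
  show sub: "T \<subseteq> N \<inter> {q. q dvd n}"
    using assms PowN[OF assms(1)] prod_primes_dvd_iff[of T n] by auto
  have "card T \<le> card (N \<inter> {q. q dvd n})" by (intro card_mono sub) simp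
  then show "card T \<le> K" using card_S[OF assms(3,4)] by linarith
qed

lemma M_props: "M \<ge> 1" "real M \<le> x" "M \<le> Mx" "real M \<le> x powr (1 - \<epsilon>)"
proof -
  have "x powr (1 - \<epsilon>) \<ge> 1" using x1 eps1 by (intro ge_one_powr_ge_zero) auto
  then show "M \<ge> 1" unfolding M_def by (simp add: le_nat_floor)
  show Mle: "real M \<le> x powr (1 - \<epsilon>)" unfolding M_def using x1 by (simp add: of_nat_floor)
  have "x powr (1 - \<epsilon>) \<le> x powr 1" using x1 eps0 by (intro powr_mono) auto
  then show "real M \<le> x" using Mle x1 by simp
  then show "M \<le> Mx" unfolding Mx_def by (simp add: le_nat_floor)
qed

lemma PN:
  assumes "n \<ge> 1" "real n \<le> x"
  shows "real (card {T\<in>Tl. \<Prod>T dvd n}) \<le> 2 ^ K / ln z0 ^ K * (\<Sum>e\<in>{M<..Mx}. if e dvd n then LK K e else 0)"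
proof (cases "{T\<in>Tl. \<Prod>T dvd n} = {}")
  case True
  have s0: "(\<Sum>e\<in>{M<..Mx}. if e dvd n then LK K e else 0) \<ge> 0" by (intro sum_nonneg) (auto simp: LK_nonneg)
  have "ln z0 > 0" using z0_gt1 by simp
  then have "2 ^ K / ln z0 ^ K * (\<Sum>e\<in>{M<..Mx}. if e dvd n then LK K e else 0) \<ge> 0"
    using s0 by (intro mult_nonneg_nonneg divide_nonneg_pos) auto
  moreover have "card {T\<in>Tl. \<Prod>T dvd n} = 0" using True by (simp only: card.empty)
  ultimately show ?thesis by simp
next
  case False
  then obtain T0 where T0: "T0 \<in> Tl" "\<Prod>T0 dvd n" by auto
  have T0N: "T0 \<in> Pow N" using T0 unfolding Tl_def by auto
  define e0 where "e0 = \<Prod>T0"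
  have e0M: "e0 > M" using T0 unfolding Tl_def e0_def by auto
  have e0n: "e0 \<le> n" using T0 assms unfolding e0_def by (intro dvd_imp_le) auto
  then have e0Mx: "e0 \<le> Mx" using assms unfolding Mx_def by (auto intro: le_nat_floor)
  have e01: "e0 > 1" using e0M M_props by linarith
  have lz: "ln z0 > 0" using z0_gt1 by simp
  have LKe0: "LK K e0 \<ge> ln z0 ^ K"
  proof (rule LK_lower)
    show "1 \<le> z0" using z0_gt1 by simp
    show "1 < e0" by (rule e01)
    have pf: "prime_factors e0 = T0" unfolding e0_def using PowN[OF T0N] by (intro prime_factors_prod_primes) auto
    show "\<And>p. p \<in> prime_factors e0 \<Longrightarrow> z0 \<le> real p" using pf PowN(3)[OF T0N] by (auto simp: less_imp_le)
    show "card (prime_factors e0) \<le> K" using pf card_T_le[OF T0N T0(2) assms] by simp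
  qed
  have "LK K e0 \<le> (\<Sum>e\<in>{M<..Mx}. if e dvd n then LK K e else 0)"
  proof -
    have "LK K e0 = (if e0 dvd n then LK K e0 else 0)" using T0 e0_def by simp
    also have "\<dots> \<le> (\<Sum>e\<in>{M<..Mx}. if e dvd n then LK K e else 0)"
      using e0M e0Mx by (intro member_le_sum) (auto simp: LK_nonneg)
    finally show ?thesis .
  qed
  then have sum_ge: "1 \<le> (\<Sum>e\<in>{M<..Mx}. if e dvd n then LK K e else 0) / ln z0 ^ K"
    using LKe0 lz by (simp add: le_divide_eq)
  have "card {T\<in>Tl. \<Prod>T dvd n} \<le> card (Pow (N \<inter> {q. q dvd n}))"
  proof (intro card_mono)
    show "finite (Pow (N \<inter> {q. q dvd n}))" by simp
    show "{T\<in>Tl. \<Prod>T dvd n} \<subseteq> Pow (N \<inter> {q. q dvd n})"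
      using card_T_le(1)[OF _ _ assms] unfolding Tl_def by auto
  qed
  also have "\<dots> = 2 ^ card (N \<inter> {q. q dvd n})" by (rule card_Pow) simp
  also have "\<dots> \<le> 2 ^ K" using card_S[OF assms] by (intro power_increasing) auto
  finally have "real (card {T\<in>Tl. \<Prod>T dvd n}) \<le> 2 ^ K" by (simp add: numeral_power_le_of_nat_cancel_iff)
  also have "\<dots> \<le> 2 ^ K * ((\<Sum>e\<in>{M<..Mx}. if e dvd n then LK K e else 0) / ln z0 ^ K)"
    using mult_left_mono[OF sum_ge, of "2 ^ K"] by simp
  finally show ?thesis by simp
qed

lemma finite_Ts [simp]: "finite Ts" and finite_Tl [simp]: "finite Tl"
  unfolding Ts_def Tl_def by simp_all

lemma PowN_split: "Pow N = Ts \<union> Tl" "Ts \<inter> Tl = {}"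
  unfolding Ts_def Tl_def by auto

lemma Ts_props:
  assumes "T \<in> Ts"
  shows "T \<in> Pow N" "\<Prod>T \<ge> 1" "\<Prod>T \<le> M" "card T \<le> K"
proof -
  show TN: "T \<in> Pow N" using assms unfolding Ts_def by auto
  show p1: "\<Prod>T \<ge> 1" using prod_pos_T[OF TN] by simp
  show pM: "\<Prod>T \<le> M" using assms unfolding Ts_def by auto
  have "real (\<Prod>T) \<le> x" using pM M_props by linarith
  then show "card T \<le> K" using card_T_le(2)[OF TN dvd_refl p1] by simp
qed

lemma sum_Ts_le:
  fixes g :: "nat \<Rightarrow> real"
  assumes "\<And>d. g d \<ge> 0"
  shows "(\<Sum>T\<in>Ts. g (\<Prod>T)) \<le> (\<Sum>d\<in>{1..M}. g d)"
proof -
  have inj: "inj_on (\<lambda>T. \<Prod>T) Ts"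
    by (rule inj_on_subset[OF inj_on_prod_primes[OF finite_N N_big(1)]]) (auto simp: Ts_def)
  have "(\<Sum>T\<in>Ts. g (\<Prod>T)) = (\<Sum>d\<in>(\<lambda>T. \<Prod>T) ` Ts. g d)"
    using sum.reindex[OF inj, of g] by simp
  also have "\<dots> \<le> (\<Sum>d\<in>{1..M}. g d)"
    using Ts_props assms by (intro sum_mono2) auto
  finally show ?thesis .
qed

lemma card_Ts: "card Ts \<le> M"
proof -
  have "real (card Ts) = (\<Sum>T\<in>Ts. (\<lambda>d. 1::real) (\<Prod>T))" by simp
  also have "\<dots> \<le> (\<Sum>d\<in>{1..M}. (1::real))" by (rule sum_Ts_le) simp
  finally show ?thesis by simp
qed

lemma abs_alt_sum:
  fixes f :: "'a \<Rightarrow> real"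
  shows "\<bar>\<Sum>i\<in>A. (-1) ^ c i * f i\<bar> \<le> (\<Sum>i\<in>A. \<bar>f i\<bar>)"
proof -
  have "\<bar>\<Sum>i\<in>A. (-1) ^ c i * f i\<bar> \<le> (\<Sum>i\<in>A. \<bar>(-1) ^ c i * f i\<bar>)" by (rule sum_abs)
  also have "\<dots> = (\<Sum>i\<in>A. \<bar>f i\<bar>)" by (simp add: abs_mult)
  finally show ?thesis .
qed

definition "Sphi = (\<Sum>T\<in>Ts. (-1) ^ card T / real (totient (\<Prod>T)))"
definition "S1 = (\<Sum>T\<in>Ts. (-1) ^ card T / real (\<Prod>T))"
definition "Tp = (\<Sum>T\<in>Tl. real (prime_pi_ap x (\<Prod>T)))"
definition "Tn = (\<Sum>T\<in>Tl. real (Mx div (\<Prod>T)))"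

lemma prime_side: "\<bar>real (prime_pi_set x P) - pp * Sphi\<bar> \<le> EH + Tp"
proof -
  have "real (prime_pi_set x P) = (\<Sum>T\<in>Pow N. (-1) ^ card T * real (card {p\<in>Prs x. \<Prod>T dvd (p - 1)}))"
    unfolding prime_pi_set_eq N_def by (rule incl_excl_primes[OF _ finite_Nset]) (auto simp: Nset_def)
  also have "\<dots> = (\<Sum>T\<in>Pow N. (-1) ^ card T * real (prime_pi_ap x (\<Prod>T)))"
    by (simp add: prime_pi_ap_eq)
  also have "\<dots> = (\<Sum>T\<in>Ts. (-1) ^ card T * real (prime_pi_ap x (\<Prod>T))) + (\<Sum>T\<in>Tl. (-1) ^ card T * real (prime_pi_ap x (\<Prod>T)))"
    unfolding PowN_split(1) by (rule sum.union_disjoint) (use PowN_split(2) in auto)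
  finally have e1: "real (prime_pi_set x P) = \<dots>" .
  have e2: "pp * Sphi = (\<Sum>T\<in>Ts. (-1) ^ card T * (pp / real (totient (\<Prod>T))))"
    unfolding Sphi_def sum_distrib_left by (rule sum.cong[OF refl]) simp
  have "real (prime_pi_set x P) - pp * Sphi =
        (\<Sum>T\<in>Ts. (-1) ^ card T * (real (prime_pi_ap x (\<Prod>T)) - pp / real (totient (\<Prod>T)))) +
        (\<Sum>T\<in>Tl. (-1) ^ card T * real (prime_pi_ap x (\<Prod>T)))"
    unfolding e1 e2 by (simp add: sum_subtractf right_diff_distrib)
  also have "\<bar>\<dots>\<bar> \<le> (\<Sum>T\<in>Ts. \<bar>real (prime_pi_ap x (\<Prod>T)) - pp / real (totient (\<Prod>T))\<bar>) +
        (\<Sum>T\<in>Tl. \<bar>real (prime_pi_ap x (\<Prod>T))\<bar>)"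
    by (rule order.trans[OF abs_triangle_ineq add_mono[OF abs_alt_sum abs_alt_sum]])
  also have "(\<Sum>T\<in>Ts. \<bar>real (prime_pi_ap x (\<Prod>T)) - pp / real (totient (\<Prod>T))\<bar>) \<le> EH"
    unfolding EH_def pp_def by (rule sum_Ts_le) simp
  also have "(\<Sum>T\<in>Tl. \<bar>real (prime_pi_ap x (\<Prod>T))\<bar>) = Tp" unfolding Tp_def by simp
  finally show ?thesis by simp
qed

lemma floor_div_bound:
  assumes "d \<ge> 1"
  shows "\<bar>real (Mx div d) - x / real d\<bar> \<le> 1"
proof -
  have x0: "x \<ge> 0" using x1 by simp
  have Mxl: "real Mx \<le> x" unfolding Mx_def using x0 by (simp add: of_nat_floor)
  have Mxg: "real Mx > x - 1" unfolding Mx_def using x0 real_of_int_floor_add_one_gt[of x] by simp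
  have eq: "Mx = Mx div d * d + Mx mod d" by simp
  have r: "Mx mod d < d" using assms by simp
  have "real (Mx div d) * real d \<le> real Mx" using eq by (metis le_add1 of_nat_le_iff of_nat_mult)
  then have "real (Mx div d) * real d \<le> x" using Mxl by linarith
  then have up: "real (Mx div d) \<le> x / real d" using assms by (simp add: le_divide_eq)
  have "real Mx \<le> real (Mx div d) * real d + real d - 1"
  proof -
    have "Mx + 1 \<le> Mx div d * d + d" using eq r by linarith
    then have "real (Mx + 1) \<le> real (Mx div d * d + d)" by (simp only: of_nat_le_iff)
    then show ?thesis by simp
  qed
  then have "x - real d < real (Mx div d) * real d" using Mxg by linarith
  then have "x / real d - 1 < real (Mx div d)" using assms by (simp add: field_simps)
  then show ?thesis using up by linarith
qed

lemma int_side: "\<bar>real (Psi_set x P) - x * S1\<bar> \<le> real M + Tn"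
proof -
  have x0: "x \<ge> 0" using x1 by simp
  have "real (Psi_set x P) = (\<Sum>T\<in>Pow N. (-1) ^ card T * real (card {n\<in>{1..Mx}. \<Prod>T dvd id n}))"
    unfolding Psi_set_eq[OF x0] N_def Mx_def id_def by (rule incl_excl_primes[OF _ finite_Nset]) (auto simp: Nset_def)
  also have "\<dots> = (\<Sum>T\<in>Pow N. (-1) ^ card T * real (Mx div \<Prod>T))"
  proof (rule sum.cong[OF refl])
    fix T assume "T \<in> Pow N"
    then have "\<Prod>T > 0" by (rule prod_pos_T)
    then show "(-1) ^ card T * real (card {n\<in>{1..Mx}. \<Prod>T dvd id n}) = (-1) ^ card T * real (Mx div \<Prod>T)"
      using card_multiples[of "\<Prod>T" Mx] by simp
  qed
  also have "\<dots> = (\<Sum>T\<in>Ts. (-1) ^ card T * real (Mx div \<Prod>T)) + (\<Sum>T\<in>Tl. (-1) ^ card T * real (Mx div \<Prod>T))"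
    unfolding PowN_split(1) by (rule sum.union_disjoint) (use PowN_split(2) in auto)
  finally have e1: "real (Psi_set x P) = \<dots>" .
  have e2: "x * S1 = (\<Sum>T\<in>Ts. (-1) ^ card T * (x / real (\<Prod>T)))"
    unfolding S1_def sum_distrib_left by (rule sum.cong[OF refl]) simp
  have "real (Psi_set x P) - x * S1 =
        (\<Sum>T\<in>Ts. (-1) ^ card T * (real (Mx div \<Prod>T) - x / real (\<Prod>T))) +
        (\<Sum>T\<in>Tl. (-1) ^ card T * real (Mx div \<Prod>T))"
    unfolding e1 e2 by (simp add: sum_subtractf right_diff_distrib)
  also have "\<bar>\<dots>\<bar> \<le> (\<Sum>T\<in>Ts. \<bar>real (Mx div \<Prod>T) - x / real (\<Prod>T)\<bar>) +
        (\<Sum>T\<in>Tl. \<bar>real (Mx div \<Prod>T)\<bar>)"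
    by (rule order.trans[OF abs_triangle_ineq add_mono[OF abs_alt_sum abs_alt_sum]])
  also have "(\<Sum>T\<in>Ts. \<bar>real (Mx div \<Prod>T) - x / real (\<Prod>T)\<bar>) \<le> (\<Sum>T\<in>Ts. 1)"
  proof (rule sum_mono)
    fix T assume "T \<in> Ts"
    then have "\<Prod>T \<ge> 1" by (rule Ts_props(2))
    then show "\<bar>real (Mx div \<Prod>T) - x / real (\<Prod>T)\<bar> \<le> 1" by (rule floor_div_bound)
  qed
  also have "(\<Sum>T\<in>Ts. (1::real)) \<le> real M" using card_Ts by simp
  also have "(\<Sum>T\<in>Tl. \<bar>real (Mx div \<Prod>T)\<bar>) = Tn" unfolding Tn_def by simp
  finally show ?thesis by simp
qed

lemma mid: "\<bar>Sphi - S1\<bar> \<le> 2 * real K / z0 * (1 + ln (real M))"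
proof -
  have "Sphi - S1 = (\<Sum>T\<in>Ts. (-1) ^ card T * (1 / real (totient (\<Prod>T)) - 1 / real (\<Prod>T)))"
    unfolding Sphi_def S1_def by (simp add: sum_subtractf right_diff_distrib)
  also have "\<bar>\<dots>\<bar> \<le> (\<Sum>T\<in>Ts. \<bar>1 / real (totient (\<Prod>T)) - 1 / real (\<Prod>T)\<bar>)"
    by (rule abs_alt_sum)
  also have "\<dots> \<le> (\<Sum>T\<in>Ts. (\<lambda>d. 2 * real K / (z0 * real d)) (\<Prod>T))"
  proof (rule sum_mono)
    fix T assume T: "T \<in> Ts"
    note TP = Ts_props[OF T]
    have a: "finite T" "\<And>q. q \<in> T \<Longrightarrow> prime q" "\<And>q. q \<in> T \<Longrightarrow> real q > z0"
      using PowN[OF TP(1)] by auto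
    have b: "real (card T) \<le> real K" using TP by simp
    have c: "z0 > 0" using z0_gt1 by simp
    have d: "2 * real K \<le> z0" using z0K unfolding z0_def .
    show "\<bar>1 / real (totient (\<Prod>T)) - 1 / real (\<Prod>T)\<bar> \<le> (\<lambda>d. 2 * real K / (z0 * real d)) (\<Prod>T)"
      using totient_diff_bound[OF a b c d] by simp
  qed
  also have "\<dots> \<le> (\<Sum>d\<in>{1..M}. 2 * real K / (z0 * real d))"
    using z0_gt1 by (intro sum_Ts_le) simp
  also have "\<dots> = 2 * real K / z0 * (\<Sum>d\<in>{1..M}. 1 / real d)"
    unfolding sum_distrib_left by (rule sum.cong[OF refl]) simp
  also have "\<dots> \<le> 2 * real K / z0 * (1 + ln (real M))"
    using harm_upper[OF M_props(1)] z0_gt1 by (intro mult_left_mono) auto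
  finally show ?thesis .
qed

definition "G n = (\<Sum>e\<in>{M<..Mx}. if e dvd n then LK K e else 0)"

lemma G_split: "G n = (\<Sum>e\<in>{1..Mx}. if e dvd n then LK K e else 0) - (\<Sum>e\<in>{1..M}. if e dvd n then LK K e else 0)"
proof -
  have "{M<..Mx} = {1..Mx} - {1..M}" using M_props(1) by auto
  then show ?thesis unfolding G_def using M_props(3) by (simp add: sum_diff)
qed

lemma H_eq:
  assumes "n \<ge> 1" "n \<le> Mx"
  shows "(\<Sum>e\<in>{1..Mx}. if e dvd n then LK K e else 0) = ln (real n) ^ K"
proof -
  have "(\<Sum>d | d dvd n. LK K d) = (\<Sum>e\<in>{1..Mx}. if e dvd n then LK K e else 0)"
  proof (rule divisor_sum_as_if)
    show "n > 0" using assms by simp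
    show "finite {1..Mx}" by simp
    fix d assume "d dvd n"
    then have "d \<ge> 1" "d \<le> n" using assms by (auto intro: dvd_imp_le simp: Suc_le_eq intro!: Nat.gr0I)
    then show "d \<in> {1..Mx}" using assms by simp
  qed
  then show ?thesis using LK_sum[of n K] assms by simp
qed

lemma lnx_pos: "ln x > 0" using x1 by simp

lemma LK_le_lnx:
  assumes "e \<in> {1..M}"
  shows "LK K e \<le> ln x ^ K"
proof -
  have "LK K e \<le> ln (real e) ^ K" using assms by (intro LK_le) auto
  also have "\<dots> \<le> ln x ^ K" using assms M_props(2) by (intro power_mono) auto
  finally show ?thesis .
qed

lemma J_prime_lower:
  "(\<Sum>e\<in>{1..M}. LK K e * real (prime_pi_ap x e)) \<ge> pp * W - ln x ^ K * EH"
proof -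
  have "(\<Sum>e\<in>{1..M}. LK K e * real (prime_pi_ap x e)) \<ge>
        (\<Sum>e\<in>{1..M}. pp * (LK K e / real e) - ln x ^ K * \<bar>real (prime_pi_ap x e) - pp / real (totient e)\<bar>)"
  proof (rule sum_mono)
    fix e assume e: "e \<in> {1..M}"
    define L where "L = LK K e"
    define a where "a = real (prime_pi_ap x e)"
    define b where "b = pp / real (totient e)"
    have L0: "L \<ge> 0" unfolding L_def by (rule LK_nonneg)
    have Lx: "L \<le> ln x ^ K" unfolding L_def using LK_le_lnx[OF e] .
    have pp0: "pp \<ge> 0" unfolding pp_def by simp
    have phi: "real (totient e) > 0" "real (totient e) \<le> real e" using e by (auto simp: totient_le)
    have "b \<ge> pp / real e" unfolding b_def using phi pp0 by (intro divide_left_mono) auto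
    then have "L * b \<ge> L * (pp / real e)" using L0 by (intro mult_left_mono) auto
    moreover have "L * \<bar>a - b\<bar> \<le> ln x ^ K * \<bar>a - b\<bar>" using Lx by (intro mult_right_mono) auto
    moreover have "L * a \<ge> L * (b - \<bar>a - b\<bar>)" using L0 by (intro mult_left_mono) auto
    ultimately have "L * a \<ge> L * (pp / real e) - ln x ^ K * \<bar>a - b\<bar>" by (simp add: right_diff_distrib)
    then show "pp * (LK K e / real e) - ln x ^ K * \<bar>real (prime_pi_ap x e) - pp / real (totient e)\<bar> \<le> LK K e * real (prime_pi_ap x e)"
      unfolding L_def a_def b_def by (simp add: field_simps)
  qed
  also have "(\<Sum>e\<in>{1..M}. pp * (LK K e / real e) - ln x ^ K * \<bar>real (prime_pi_ap x e) - pp / real (totient e)\<bar>) = pp * W - ln x ^ K * EH"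
    unfolding W_def EH_def pp_def by (simp add: sum_subtractf sum_distrib_left)
  finally show ?thesis .
qed

lemma Tp_bound: "Tp \<le> 2 ^ K / ln z0 ^ K * (pp * ln x ^ K - pp * W + ln x ^ K * EH)"
proof -
  define C where "C = 2 ^ K / ln z0 ^ K"
  have C0: "C \<ge> 0" unfolding C_def using z0_gt1 by simp
  have "Tp = real (\<Sum>T\<in>Tl. card {p\<in>Prs x. \<Prod>T dvd (p - 1)})" unfolding Tp_def prime_pi_ap_eq by simp
  also have "(\<Sum>T\<in>Tl. card {p\<in>Prs x. \<Prod>T dvd (p - 1)}) = (\<Sum>p\<in>Prs x. card {T\<in>Tl. \<Prod>T dvd (p - 1)})"
    by (rule sum_card_swap) auto
  also have "real \<dots> = (\<Sum>p\<in>Prs x. real (card {T\<in>Tl. \<Prod>T dvd (p - 1)}))" by simp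
  also have "\<dots> \<le> (\<Sum>p\<in>Prs x. C * G (p - 1))"
  proof (rule sum_mono)
    fix p assume p: "p \<in> Prs x"
    then have "p \<ge> 2" "real p \<le> x" unfolding Prs_def using prime_ge_2_nat by auto
    then show "real (card {T\<in>Tl. \<Prod>T dvd (p - 1)}) \<le> C * G (p - 1)"
      unfolding C_def G_def by (intro PN) auto
  qed
  also have "\<dots> = C * (\<Sum>p\<in>Prs x. G (p - 1))" by (simp add: sum_distrib_left)
  also have "(\<Sum>p\<in>Prs x. G (p - 1)) \<le> pp * ln x ^ K - pp * W + ln x ^ K * EH"
  proof -
    have "(\<Sum>p\<in>Prs x. G (p - 1)) = (\<Sum>p\<in>Prs x. ln (real (p - 1)) ^ K) -
          (\<Sum>p\<in>Prs x. \<Sum>e\<in>{1..M}. if e dvd (p - 1) then LK K e else 0)"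
    proof -
      have "(\<Sum>p\<in>Prs x. G (p - 1)) = (\<Sum>p\<in>Prs x. ln (real (p - 1)) ^ K - (\<Sum>e\<in>{1..M}. if e dvd (p - 1) then LK K e else 0))"
      proof (rule sum.cong[OF refl])
        fix p assume p: "p \<in> Prs x"
        then have "p \<ge> 2" "real p \<le> x" unfolding Prs_def using prime_ge_2_nat by auto
        then have "p - 1 \<ge> 1" "p - 1 \<le> Mx" unfolding Mx_def by (auto intro: le_nat_floor)
        then show "G (p - 1) = ln (real (p - 1)) ^ K - (\<Sum>e\<in>{1..M}. if e dvd (p - 1) then LK K e else 0)"
          using G_split H_eq by simp
      qed
      then show ?thesis by (simp add: sum_subtractf)
    qed
    also have "(\<Sum>p\<in>Prs x. \<Sum>e\<in>{1..M}. if e dvd (p - 1) then LK K e else 0) =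
               (\<Sum>e\<in>{1..M}. LK K e * real (prime_pi_ap x e))"
      using sum_if_dvd_swap[of "Prs x" "{1..M}" "\<lambda>p. p - 1" "LK K"] by (simp add: prime_pi_ap_eq)
    also have "(\<Sum>p\<in>Prs x. ln (real (p - 1)) ^ K) \<le> (\<Sum>p\<in>Prs x. ln x ^ K)"
    proof (rule sum_mono)
      fix p assume p: "p \<in> Prs x"
      then have "p \<ge> 2" "real p \<le> x" unfolding Prs_def using prime_ge_2_nat by auto
      then have "0 \<le> ln (real (p - 1))" "ln (real (p - 1)) \<le> ln x" using x1 by (auto simp: of_nat_diff)
      then show "ln (real (p - 1)) ^ K \<le> ln x ^ K" by (intro power_mono) auto
    qed
    also have "(\<Sum>p\<in>Prs x. ln x ^ K) = pp * ln x ^ K" unfolding pp_def prime_pi_eq by simp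
    finally show ?thesis using J_prime_lower by linarith
  qed
  then have "C * (\<Sum>p\<in>Prs x. G (p - 1)) \<le> C * (pp * ln x ^ K - pp * W + ln x ^ K * EH)"
    using C0 by (intro mult_left_mono) auto
  finally show ?thesis unfolding C_def .
qed

lemma Tn_bound: "Tn \<le> 2 ^ K / ln z0 ^ K * (x * ln x ^ K - x * W + real M * ln x ^ K)"
proof -
  define C where "C = 2 ^ K / ln z0 ^ K"
  have C0: "C \<ge> 0" unfolding C_def using z0_gt1 by simp
  have "Tn = real (\<Sum>T\<in>Tl. card {n\<in>{1..Mx}. \<Prod>T dvd n})"
  proof -
    have "\<And>T. T \<in> Tl \<Longrightarrow> card {n\<in>{1..Mx}. \<Prod>T dvd n} = Mx div \<Prod>T"
      using prod_pos_T unfolding Tl_def by (intro card_multiples) auto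
    then show ?thesis unfolding Tn_def by simp
  qed
  also have "(\<Sum>T\<in>Tl. card {n\<in>{1..Mx}. \<Prod>T dvd n}) = (\<Sum>n\<in>{1..Mx}. card {T\<in>Tl. \<Prod>T dvd n})"
    by (rule sum_card_swap) auto
  also have "real \<dots> = (\<Sum>n\<in>{1..Mx}. real (card {T\<in>Tl. \<Prod>T dvd n}))" by simp
  also have "\<dots> \<le> (\<Sum>n\<in>{1..Mx}. C * G n)"
  proof (rule sum_mono)
    fix n assume n: "n \<in> {1..Mx}"
    then have "n \<ge> 1" "real n \<le> x" unfolding Mx_def using x1 by (auto intro: le_nat_floor_real)
    then show "real (card {T\<in>Tl. \<Prod>T dvd n}) \<le> C * G n"
      unfolding C_def G_def by (intro PN) auto
  qed
  also have "\<dots> = C * (\<Sum>n\<in>{1..Mx}. G n)" by (simp add: sum_distrib_left)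
  also have "(\<Sum>n\<in>{1..Mx}. G n) \<le> x * ln x ^ K - x * W + real M * ln x ^ K"
  proof -
    have "(\<Sum>n\<in>{1..Mx}. G n) = (\<Sum>n\<in>{1..Mx}. ln (real n) ^ K) -
          (\<Sum>n\<in>{1..Mx}. \<Sum>e\<in>{1..M}. if e dvd id n then LK K e else 0)"
    proof -
      have "(\<Sum>n\<in>{1..Mx}. G n) = (\<Sum>n\<in>{1..Mx}. ln (real n) ^ K - (\<Sum>e\<in>{1..M}. if e dvd id n then LK K e else 0))"
      proof (rule sum.cong[OF refl])
        fix n assume n: "n \<in> {1..Mx}"
        then show "G n = ln (real n) ^ K - (\<Sum>e\<in>{1..M}. if e dvd id n then LK K e else 0)"
          using G_split H_eq by simp
      qed
      then show ?thesis by (simp add: sum_subtractf)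
    qed
    moreover have "(\<Sum>n\<in>{1..Mx}. \<Sum>e\<in>{1..M}. if e dvd id n then LK K e else 0) =
               (\<Sum>e\<in>{1..M}. LK K e * real (card {n\<in>{1..Mx}. e dvd id n}))"
      by (rule sum_if_dvd_swap) auto
    moreover have "(\<Sum>e\<in>{1..M}. LK K e * real (card {n\<in>{1..Mx}. e dvd id n})) \<ge> (\<Sum>e\<in>{1..M}. x * (LK K e / real e) - ln x ^ K)"
    proof (rule sum_mono)
      fix e assume e: "e \<in> {1..M}"
      have "card {n\<in>{1..Mx}. e dvd id n} = Mx div e" using e card_multiples[of e Mx] by simp
      moreover have "real (Mx div e) \<ge> x / real e - 1" using floor_div_bound[of e] e by auto
      ultimately have "LK K e * real (card {n\<in>{1..Mx}. e dvd id n}) \<ge> LK K e * (x / real e - 1)"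
        by (simp add: mult_left_mono LK_nonneg)
      moreover have "LK K e * (x / real e - 1) = x * (LK K e / real e) - LK K e" by (simp add: field_simps)
      moreover have "LK K e \<le> ln x ^ K" using LK_le_lnx[OF e] .
      ultimately show "x * (LK K e / real e) - ln x ^ K \<le> LK K e * real (card {n\<in>{1..Mx}. e dvd id n})"
        by linarith
    qed
    moreover have "(\<Sum>e\<in>{1..M}. x * (LK K e / real e) - ln x ^ K) = x * W - real M * ln x ^ K"
      unfolding W_def by (simp add: sum_subtractf sum_distrib_left)
    moreover have "(\<Sum>n\<in>{1..Mx}. ln (real n) ^ K) \<le> (\<Sum>n\<in>{1..Mx}. ln x ^ K)"
    proof (rule sum_mono)
      fix n assume n: "n \<in> {1..Mx}"
      then have "n \<ge> 1" "real n \<le> x" unfolding Mx_def using x1 by (auto intro: le_nat_floor_real)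
      then have "0 \<le> ln (real n)" "ln (real n) \<le> ln x" by auto
      then show "ln (real n) ^ K \<le> ln x ^ K" by (intro power_mono) auto
    qed
    moreover have "(\<Sum>n\<in>{1..Mx}. ln x ^ K) = real Mx * ln x ^ K" by simp
    moreover have "real Mx * ln x ^ K \<le> x * ln x ^ K"
      unfolding Mx_def using x1 lnx_pos by (intro mult_right_mono) (auto simp: of_nat_floor)
    ultimately show ?thesis by linarith
  qed
  then have "C * (\<Sum>n\<in>{1..Mx}. G n) \<le> C * (x * ln x ^ K - x * W + real M * ln x ^ K)"
    using C0 by (intro mult_left_mono) auto
  finally show ?thesis unfolding C_def .
qed

lemma aux_alg:
  fixes A L p W E :: real
  assumes "L > 0" "p > 0"
  shows "A / L * (p * L - p * W + L * E) / p = A * (1 - W / L + E / p)"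
proof -
  have "A / L * (p * L - p * W + L * E) / p = A * ((p * L - p * W + L * E) / (L * p))" by simp
  also have "(p * L - p * W + L * E) / (L * p) = p * L / (L * p) - p * W / (L * p) + L * E / (L * p)"
    by (simp add: add_divide_distrib diff_divide_distrib)
  also have "p * L / (L * p) = 1" using assms by simp
  also have "p * W / (L * p) = W / L" using assms by simp
  also have "L * E / (L * p) = E / p" using assms by simp
  finally show ?thesis .
qed

lemma C_eq: "2 ^ K / ln z0 ^ K = (2 * U) ^ K / ln x ^ K"
  unfolding lnz0 using U1 by (simp add: power_divide power_mult_distrib)

lemma main_fixed:
  assumes ppos: "pp > 0"
  shows "\<bar>real (prime_pi_set x P) / pp - real (Psi_set x P) / x\<bar> \<le>
    EH / pp + (2 * U) ^ K * (1 - W / ln x ^ K + EH / pp) + 2 * real K / z0 * (1 + ln (real M)) +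
    real M / x + (2 * U) ^ K * (1 - W / ln x ^ K + real M / x)"
proof -
  have x0: "x > 0" using x1 by simp
  have lk: "ln x ^ K > 0" using lnx_pos by simp
  have "Tp / pp \<le> (2 * U) ^ K / ln x ^ K * (pp * ln x ^ K - pp * W + ln x ^ K * EH) / pp"
    using Tp_bound ppos unfolding C_eq by (intro divide_right_mono) auto
  also have "\<dots> = (2 * U) ^ K * (1 - W / ln x ^ K + EH / pp)"
    by (rule aux_alg[OF lk ppos])
  finally have tp: "Tp / pp \<le> (2 * U) ^ K * (1 - W / ln x ^ K + EH / pp)" .
  have "Tn / x \<le> (2 * U) ^ K / ln x ^ K * (x * ln x ^ K - x * W + real M * ln x ^ K) / x"
    using Tn_bound x0 unfolding C_eq by (intro divide_right_mono) auto
  also have "\<dots> = (2 * U) ^ K * (1 - W / ln x ^ K + real M / x)"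
    by (subst mult.commute[of "real M"]) (rule aux_alg[OF lk x0])
  finally have tn: "Tn / x \<le> (2 * U) ^ K * (1 - W / ln x ^ K + real M / x)" .
  have "real (prime_pi_set x P) / pp - real (Psi_set x P) / x =
        (real (prime_pi_set x P) - pp * Sphi) / pp + (Sphi - S1) - (real (Psi_set x P) - x * S1) / x"
    using ppos x0 by (simp add: field_simps)
  also have "\<bar>\<dots>\<bar> \<le> \<bar>real (prime_pi_set x P) - pp * Sphi\<bar> / pp + \<bar>Sphi - S1\<bar> + \<bar>real (Psi_set x P) - x * S1\<bar> / x"
    using ppos x0 by (simp add: abs_triangle_ineq4 abs_triangle_ineq order.trans[OF abs_triangle_ineq4] abs_divide
        add_mono order.trans[OF abs_triangle_ineq])
  also have "\<dots> \<le> (EH + Tp) / pp + 2 * real K / z0 * (1 + ln (real M)) + (real M + Tn) / x"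
    using prime_side int_side mid ppos x0 by (intro add_mono divide_right_mono) auto
  also have "\<dots> = EH / pp + Tp / pp + 2 * real K / z0 * (1 + ln (real M)) + real M / x + Tn / x"
    by (simp add: add_divide_distrib)
  finally show ?thesis using tp tn by linarith
qed

lemma W_lower_bound:
  fixes R :: real
  assumes R: "R \<ge> 1" "real M \<ge> R" "R * ln R \<le> ln (real M)" and l2: "ln 2 \<le> \<epsilon> * ln x" and e2: "\<epsilon> \<le> 1/2"
  shows "W \<ge> (1 - 1/R) ^ (K+1) * (1 - 2 * \<epsilon>) ^ K * ln x ^ K"
proof -
  have Mpos: "real M > 0" using M_props(1) by simp
  have "(1 - 1/R) ^ (K+1) * real M * ln (real M) ^ K \<le> real M * W"
    using sum_ln_pow_lower[OF R, of K] W_lower[where M=M and k=K] unfolding W_def by linarith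
  then have W1: "(1 - 1/R) ^ (K+1) * ln (real M) ^ K \<le> W" using Mpos
    by (simp add: mult.commute mult.left_commute mult_le_cancel_left_pos)
  have xe1: "x powr (1 - \<epsilon>) \<ge> 1" using x1 eps1 by (intro ge_one_powr_ge_zero) auto
  have "real M \<ge> x powr (1 - \<epsilon>) / 2" unfolding M_def using nat_floor_half[OF xe1] .
  then have "ln (real M) \<ge> ln (x powr (1 - \<epsilon>) / 2)" using xe1 by (subst ln_le_cancel_iff) auto
  also have "ln (x powr (1 - \<epsilon>) / 2) = (1 - \<epsilon>) * ln x - ln 2" using x1 by (simp add: ln_div ln_powr)
  finally have "ln (real M) \<ge> (1 - 2 * \<epsilon>) * ln x" using l2 by (simp add: algebra_simps)
  moreover have "(1 - 2 * \<epsilon>) * ln x \<ge> 0" using e2 lnx_pos by simp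
  ultimately have "ln (real M) ^ K \<ge> ((1 - 2 * \<epsilon>) * ln x) ^ K" by (intro power_mono) auto
  moreover have "(1 - 1/R) ^ (K+1) \<ge> 0" using R by simp
  ultimately have "(1 - 1/R) ^ (K+1) * ln (real M) ^ K \<ge> (1 - 1/R) ^ (K+1) * ((1 - 2 * \<epsilon>) * ln x) ^ K"
    by (intro mult_left_mono) auto
  then show ?thesis using W1 by (simp add: power_mult_distrib mult.assoc)
qed

end


lemma Psi_lower:
  fixes x U u :: real and K :: nat and P :: "nat set"
  assumes x1: "x > 1" and u1: "1 \<le> u" and uU: "u \<le> U" and KU: "U \<le> real K"
    and Psmall: "{p. prime p \<and> real p \<le> x powr (1/u)} \<subseteq> P"
    and l70: "ln (x powr (1/U)) \<ge> 70"
  shows "real (Psi_set x P) \<ge> cS (8 * K) * x"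
proof -
  define z where "z = x powr (1/U)"
  have U1: "U \<ge> 1" using u1 uU by linarith
  have zpos: "z > 0" unfolding z_def using x1 by simp
  have zu: "z \<le> x powr (1/u)" unfolding z_def using x1 u1 uU by (intro powr_mono) (auto simp: field_simps)
  have sub: "Smooth z x \<subseteq> {n::nat. 1 \<le> n \<and> real n \<le> x \<and> (\<forall>p. prime p \<longrightarrow> p dvd n \<longrightarrow> p \<in> P)}"
  proof
    fix n assume "n \<in> Smooth z x"
    then have n: "1 \<le> n" "real n \<le> x" "\<And>p. prime p \<Longrightarrow> p dvd n \<Longrightarrow> real p \<le> z"
      unfolding Smooth_def by auto
    have "\<And>p. prime p \<Longrightarrow> p dvd n \<Longrightarrow> p \<in> P"
    proof -
      fix p assume "prime p" "p dvd n"
      then have "real p \<le> z" using n(3) by blast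
      then have "real p \<le> x powr (1/u)" using zu by linarith
      then show "p \<in> P" using Psmall \<open>prime p\<close> by auto
    qed
    then show "n \<in> {n::nat. 1 \<le> n \<and> real n \<le> x \<and> (\<forall>p. prime p \<longrightarrow> p dvd n \<longrightarrow> p \<in> P)}" using n by auto
  qed
  have fin: "finite {n::nat. 1 \<le> n \<and> real n \<le> x \<and> (\<forall>p. prime p \<longrightarrow> p dvd n \<longrightarrow> p \<in> P)}"
    by (rule finite_subset[of _ "{1..nat \<lfloor>x\<rfloor>}"]) (auto intro: le_nat_floor)
  have "card (Smooth z x) \<le> Psi_set x P" unfolding Psi_set_def by (rule card_mono[OF fin sub])
  moreover have "real (card (Smooth z x)) \<ge> cS (8 * K) * x"
  proof (rule H3[OF zpos])
    show "70 \<le> ln z" using l70 unfolding z_def .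
    show "1 \<le> x" using x1 by simp
    have e: "(real (8 * K) + 8) / 8 = real K + 1" by simp
    have "z powr ((real (8 * K) + 8) / 8) = z powr (real K + 1)" by (simp only: e)
    also have "\<dots> = x powr (1 / U * (real K + 1))" unfolding z_def by (rule powr_powr)
    also have "1 / U * (real K + 1) = (real K + 1) / U" by simp
    finally have "z powr ((real (8 * K) + 8) / 8) = x powr ((real K + 1) / U)" .
    moreover have "x powr 1 \<le> x powr ((real K + 1) / U)"
      using x1 KU U1 by (intro powr_mono) (auto simp: field_simps)
    ultimately show "x \<le> z powr ((real (8 * K) + 8) / 8)" using x1 by simp
  qed
  ultimately show ?thesis by linarith
qed

lemma powr_threshold:
  fixes x b T :: real
  assumes "b > 0" "T > 0" "x \<ge> T powr (1/b)"
  shows "x powr b \<ge> T"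
proof -
  have "T = (T powr (1/b)) powr b" using assms by (simp add: powr_powr)
  also have "\<dots> \<le> x powr b" using assms by (intro powr_mono2) auto
  finally show ?thesis .
qed

lemma one_minus_pow_ge:
  fixes a :: real
  assumes "0 \<le> a" "a \<le> 1"
  shows "(1 - a) ^ n \<ge> 1 - real n * a" "(1 - a) ^ n \<le> 1" "(1 - a) ^ n \<ge> 0"
proof -
  have "1 + real n * (- a) \<le> (1 + (- a)) ^ n" using assms by (intro Bernoulli_inequality) auto
  then show "(1 - a) ^ n \<ge> 1 - real n * a" by simp
  show "(1 - a) ^ n \<le> 1" using assms by (intro power_le_one) auto
  show "(1 - a) ^ n \<ge> 0" using assms by simp
qed

lemma prime_pi_pos: "x \<ge> 2 \<Longrightarrow> prime_pi x > 0"
proof -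
  assume "x \<ge> 2"
  then have "2 \<in> Prs x" unfolding Prs_def by simp
  then have "card (Prs x) > 0" by (subst card_gt_0_iff) auto
  then show ?thesis by (simp add: prime_pi_eq)
qed

theorem lemma2p1:
  fixes U :: real
  assumes EH: "\<And>\<epsilon>::real. \<epsilon> > 0 \<Longrightarrow>
     (\<lambda>x::real. \<Sum>d\<in>{1..nat \<lfloor>x powr (1 - \<epsilon>)\<rfloor>}.
         \<bar>real (prime_pi_ap x d) - real (prime_pi x) / real (totient d)\<bar>)
       \<in> o[at_top](\<lambda>x. real (prime_pi x))"
    and U: "U \<ge> 1"
  shows "\<forall>\<delta>>0. \<exists>X. \<forall>x\<ge>X. \<forall>u::real. \<forall>P::nat set.
           1 \<le> u \<and> u \<le> U \<and>
           (\<forall>p\<in>P. prime p \<and> real p < x) \<and>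
           {p::nat. prime p \<and> real p \<le> x powr (1 / u)} \<subseteq> P \<longrightarrow>
           \<bar>(real (prime_pi_set x P) / real (prime_pi x))
              / (real (Psi_set x P) / x) - 1\<bar> \<le> \<delta>"
proof (intro allI impI)
  fix \<delta> :: real assume \<delta>: "\<delta> > 0"
  define K where "K = nat \<lceil>U\<rceil>"
  have KU: "U \<le> real K" unfolding K_def by linarith
  have K1: "K \<ge> 1" using KU U by linarith
  define c where "c = cS (8 * K)"
  have c0: "c > 0" unfolding c_def by (rule cS_pos)
  define A where "A = (2 * U) ^ K"
  have A1: "A \<ge> 1" unfolding A_def using U by (intro one_le_power) auto
  define \<eta> where "\<eta> = \<delta> * c"
  have \<eta>0: "\<eta> > 0" unfolding \<eta>_def using \<delta> c0 by simp
  define \<epsilon> where "\<epsilon> = min (1/4) (\<eta> / (16 * A * real K))"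
  have \<epsilon>0: "\<epsilon> > 0" unfolding \<epsilon>_def using \<eta>0 A1 K1 by simp
  have \<epsilon>4: "\<epsilon> \<le> 1/4" unfolding \<epsilon>_def by simp
  have \<epsilon>K: "4 * A * real K * \<epsilon> \<le> \<eta> / 4"
  proof -
    have "\<epsilon> \<le> \<eta> / (16 * A * real K)" unfolding \<epsilon>_def by simp
    then have "(4 * A * real K) * \<epsilon> \<le> (4 * A * real K) * (\<eta> / (16 * A * real K))"
      using A1 K1 by (intro mult_left_mono) auto
    also have "\<dots> = \<eta> / 4" using A1 K1 by (simp add: field_simps)
    finally show ?thesis .
  qed
  define R where "R = 16 * A * (real K + 1) / \<eta> + 1"
  have R1: "R \<ge> 1" unfolding R_def using A1 \<eta>0 by simp
  have RK: "2 * A * ((real K + 1) / R) \<le> \<eta> / 8"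
  proof -
    have Rpos: "R > 0" using R1 by simp
    have "16 * A * (real K + 1) \<le> \<eta> * R" unfolding R_def using \<eta>0 A1 by (simp add: field_simps)
    then have "16 * A * (real K + 1) / R \<le> \<eta>" using Rpos by (simp add: divide_le_eq)
    then show ?thesis by (simp add: field_simps)
  qed
  define e4 where "e4 = \<eta> / (8 * (1 + A))"
  have e40: "e4 > 0" unfolding e4_def using \<eta>0 A1 by simp
  from landau_o.smallD[OF EH[OF \<epsilon>0] e40]
  obtain X4 where X4: "\<And>x. x \<ge> X4 \<Longrightarrow>
      norm (\<Sum>d\<in>{1..nat \<lfloor>x powr (1 - \<epsilon>)\<rfloor>}. \<bar>real (prime_pi_ap x d) - real (prime_pi x) / real (totient d)\<bar>)
      \<le> e4 * norm (real (prime_pi x))"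
    unfolding eventually_at_top_linorder by blast
  define Y where "Y = max R (exp (R * ln R))"
  define t3 where "t3 = (2 * real K) powr U"
  define t4 where "t4 = exp (70 * U)"
  define t5 where "t5 = exp (ln 2 / \<epsilon>)"
  define t6 where "t6 = (2 * Y) powr (1 / (1 - \<epsilon>))"
  define t7 where "t7 = (16 * real K * (1 + 2 * U) / \<eta>) powr (2 * U)"
  define t8 where "t8 = (8 * (1 + A) / \<eta>) powr (1 / \<epsilon>)"
  have tnn: "t3 \<ge> 0" "t4 \<ge> 0" "t5 \<ge> 0" "t6 \<ge> 0" "t7 \<ge> 0" "t8 \<ge> 0"
    unfolding t3_def t4_def t5_def t6_def t7_def t8_def by simp_all
  define X where "X = max X4 0 + 2 + t3 + t4 + t5 + t6 + t7 + t8"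
  show "\<exists>X. \<forall>x\<ge>X. \<forall>u::real. \<forall>P::nat set.
           1 \<le> u \<and> u \<le> U \<and>
           (\<forall>p\<in>P. prime p \<and> real p < x) \<and>
           {p::nat. prime p \<and> real p \<le> x powr (1 / u)} \<subseteq> P \<longrightarrow>
           \<bar>(real (prime_pi_set x P) / real (prime_pi x))
              / (real (Psi_set x P) / x) - 1\<bar> \<le> \<delta>"
  proof (intro exI allI impI)
    fix x u :: real and P :: "nat set"
    assume xX: "x \<ge> X"
    assume H: "1 \<le> u \<and> u \<le> U \<and> (\<forall>p\<in>P. prime p \<and> real p < x) \<and>
           {p::nat. prime p \<and> real p \<le> x powr (1 / u)} \<subseteq> P"
    have Xge: "X4 \<le> X" "2 \<le> X" "(2 * real K) powr U \<le> X" "exp (70 * U) \<le> X" "exp (ln 2 / \<epsilon>) \<le> X"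
      "(2 * Y) powr (1 / (1 - \<epsilon>)) \<le> X" "(16 * real K * (1 + 2 * U) / \<eta>) powr (2 * U) \<le> X"
      "(8 * (1 + A) / \<eta>) powr (1 / \<epsilon>) \<le> X"
      unfolding X_def t3_def[symmetric] t4_def[symmetric] t5_def[symmetric] t6_def[symmetric]
        t7_def[symmetric] t8_def[symmetric] using tnn by linarith+
    have x2: "x \<ge> 2" using xX Xge by linarith
    have x1: "x > 1" using x2 by simp
    have x0: "x > 0" using x2 by simp
    have lnx: "ln x > 0" using x1 by simp
    have z0K: "2 * real K \<le> x powr (1/U)"
    proof -
      have "(2 * real K) powr U \<le> x" using xX Xge by linarith
      moreover have "((2 * real K) powr U) powr (1/U) = 2 * real K" using U K1 by (simp add: powr_powr)
      moreover have "((2 * real K) powr U) powr (1/U) \<le> x powr (1/U)"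
        using \<open>(2 * real K) powr U \<le> x\<close> U by (intro powr_mono2) auto
      ultimately show ?thesis by simp
    qed
    have l70: "ln (x powr (1/U)) \<ge> 70"
    proof -
      have "exp (70 * U) \<le> x" using xX Xge by linarith
      then have "70 * U \<le> ln x" using x0 by (simp add: ln_ge_iff)
      then show ?thesis using U x0 by (simp add: ln_powr field_simps)
    qed
    have u1: "1 \<le> u" and uU: "u \<le> U" and Psmall: "{p::nat. prime p \<and> real p \<le> x powr (1 / u)} \<subseteq> P"
      using H by auto
    have \<epsilon>1: "\<epsilon> < 1" using \<epsilon>4 by simp
    interpret F: fixx x U u \<epsilon> K P
      using x1 u1 uU KU \<epsilon>0 \<epsilon>1 Psmall z0K by unfold_locales auto
    have pp0: "F.pp > 0" unfolding F.pp_def using prime_pi_pos[OF x2] by simp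
    have main: "\<bar>real (prime_pi_set x P) / F.pp - real (Psi_set x P) / x\<bar> \<le>
      F.EH / F.pp + A * (1 - F.W / ln x ^ K + F.EH / F.pp) + 2 * real K / F.z0 * (1 + ln (real F.M)) +
      real F.M / x + A * (1 - F.W / ln x ^ K + real F.M / x)"
      using F.main_fixed[OF pp0] unfolding A_def .
    have EHb: "F.EH / F.pp \<le> e4"
    proof -
      have "norm F.EH \<le> e4 * norm F.pp"
        using X4[of x] xX Xge(1) unfolding F.EH_def F.M_def F.pp_def by simp
      then have "F.EH \<le> e4 * F.pp" using pp0 by simp
      then show ?thesis using pp0 by (simp add: divide_le_eq)
    qed
    have EH0: "F.EH \<ge> 0" unfolding F.EH_def by (intro sum_nonneg) auto
    have xe1: "x powr (1 - \<epsilon>) \<ge> 1" using x1 \<epsilon>1 by (intro ge_one_powr_ge_zero) auto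
    have Mh: "real F.M \<ge> x powr (1 - \<epsilon>) / 2" unfolding F.M_def using nat_floor_half[OF xe1] .
    have x2Y: "x powr (1 - \<epsilon>) \<ge> 2 * Y"
    proof (rule powr_threshold)
      show "0 < 1 - \<epsilon>" using \<epsilon>1 by simp
      show "0 < 2 * Y" unfolding Y_def using R1 by simp
      show "(2 * Y) powr (1 / (1 - \<epsilon>)) \<le> x" using xX Xge(6) unfolding t6_def by linarith
    qed
    have MY: "real F.M \<ge> Y" using Mh x2Y by linarith
    have MR: "real F.M \<ge> R" using MY unfolding Y_def by linarith
    have lnMR: "R * ln R \<le> ln (real F.M)"
    proof -
      have "exp (R * ln R) \<le> real F.M" using MY unfolding Y_def by linarith
      then show ?thesis using MR R1 by (simp add: ln_ge_iff)
    qed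
    have l2: "ln 2 \<le> \<epsilon> * ln x"
    proof -
      have "exp (ln 2 / \<epsilon>) \<le> x" using xX Xge(5) unfolding t5_def by linarith
      then have "ln 2 / \<epsilon> \<le> ln x" using x0 by (simp add: ln_ge_iff)
      then show ?thesis using \<epsilon>0 by (simp add: divide_le_eq mult.commute)
    qed
    have Wb: "F.W \<ge> (1 - 1/R) ^ (K+1) * (1 - 2 * \<epsilon>) ^ K * ln x ^ K"
      using F.W_lower_bound[OF R1 MR lnMR l2] \<epsilon>4 by simp
    have lxK: "ln x ^ K > 0" using lnx by simp
    have Vb: "F.W / ln x ^ K \<ge> 1 - (real K + 1) / R - 2 * real K * \<epsilon>"
    proof -
      define p where "p = (1 - 1/R) ^ (K+1)"
      define q where "q = (1 - 2 * \<epsilon>) ^ K"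
      have aR: "0 \<le> 1/R" "1/R \<le> 1" using R1 by auto
      have a\<epsilon>: "0 \<le> 2 * \<epsilon>" "2 * \<epsilon> \<le> 1" using \<epsilon>0 \<epsilon>4 by auto
      have p1: "p \<ge> 1 - real (K+1) * (1/R)" "p \<le> 1" "p \<ge> 0" unfolding p_def by (rule one_minus_pow_ge[OF aR])+
      have q1: "q \<ge> 1 - real K * (2 * \<epsilon>)" "q \<le> 1" "q \<ge> 0" unfolding q_def using one_minus_pow_ge[OF a\<epsilon>] by auto
      have "(1 - p) * (1 - q) \<ge> 0" using p1 q1 by simp
      then have pq: "p * q \<ge> p + q - 1" by (simp add: algebra_simps)
      have "F.W / ln x ^ K \<ge> p * q" using Wb lxK unfolding p_def q_def by (simp add: le_divide_eq)
      moreover have "real (K+1) * (1/R) = (real K + 1) / R" by simp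
      ultimately show ?thesis using pq p1 q1 by linarith
    qed
    have midb: "2 * real K / F.z0 * (1 + ln (real F.M)) \<le> \<eta> / 8"
    proof -
      define a where "a = 1 / (2 * U)"
      have a0: "a > 0" unfolding a_def using U by simp
      define w where "w = x powr a"
      have w1: "w \<ge> 1" unfolding w_def using x1 a0 by (intro ge_one_powr_ge_zero) auto
      have z0w: "F.z0 = w * w" unfolding F.z0_def w_def a_def using x0
        by (simp add: powr_add[symmetric])
      have "ln x \<le> x powr a / a" using x1 a0 by (intro ln_powr_bound) auto
      then have lnxw: "ln x \<le> 2 * U * w" unfolding w_def a_def by (simp add: mult.commute)
      have "ln (real F.M) \<le> ln x" using F.M_props(1,2) by simp
      then have "1 + ln (real F.M) \<le> (1 + 2 * U) * w" using lnxw w1 by (simp add: algebra_simps)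
      then have "2 * real K / F.z0 * (1 + ln (real F.M)) \<le> 2 * real K / F.z0 * ((1 + 2 * U) * w)"
        using F.z0_gt1 by (intro mult_left_mono) auto
      also have "\<dots> = 2 * real K * (1 + 2 * U) / w" unfolding z0w using w1 by (simp add: field_simps)
      also have "\<dots> \<le> \<eta> / 8"
      proof -
        have T0: "16 * real K * (1 + 2 * U) / \<eta> > 0" using K1 U \<eta>0 by simp
        have "w \<ge> 16 * real K * (1 + 2 * U) / \<eta>" unfolding w_def
        proof (rule powr_threshold[OF a0 T0])
          show "(16 * real K * (1 + 2 * U) / \<eta>) powr (1 / a) \<le> x"
            using xX Xge(7) unfolding t7_def a_def by simp
        qed
        then have "\<eta> * w \<ge> 16 * real K * (1 + 2 * U)" using \<eta>0 by (simp add: divide_le_eq mult.commute)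
        then show ?thesis using w1 by (simp add: divide_le_eq field_simps)
      qed
      finally show ?thesis .
    qed
    have Mxb: "(1 + A) * (real F.M / x) \<le> \<eta> / 8"
    proof -
      have "real F.M / x \<le> x powr (1 - \<epsilon>) / x" using F.M_props(4) x0 by (intro divide_right_mono) auto
      also have "x powr (1 - \<epsilon>) / x = 1 / x powr \<epsilon>" using x0 by (simp add: powr_diff)
      finally have mx: "real F.M / x \<le> 1 / x powr \<epsilon>" .
      have T0: "8 * (1 + A) / \<eta> > 0" using A1 \<eta>0 by simp
      have "x powr \<epsilon> \<ge> 8 * (1 + A) / \<eta>"
      proof (rule powr_threshold[OF \<epsilon>0 T0])
        show "(8 * (1 + A) / \<eta>) powr (1 / \<epsilon>) \<le> x" using xX Xge(8) unfolding t8_def by linarith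
      qed
      then have "(1 + A) / x powr \<epsilon> \<le> \<eta> / 8" using T0 \<eta>0 A1
        by (simp add: divide_le_eq field_simps)
      moreover have "(1 + A) * (real F.M / x) \<le> (1 + A) * (1 / x powr \<epsilon>)" using mx A1 by (intro mult_left_mono) auto
      moreover have "(1 + A) * (1 / x powr \<epsilon>) = (1 + A) / x powr \<epsilon>" by simp
      ultimately show ?thesis by linarith
    qed
    have A0: "A \<ge> 0" using A1 by simp
    have t1: "A * (1 - F.W / ln x ^ K) \<le> A * ((real K + 1) / R + 2 * real K * \<epsilon>)"
      using Vb A0 by (intro mult_left_mono) auto
    have t2: "(1 + A) * (F.EH / F.pp) \<le> (1 + A) * e4" using EHb A1 by (intro mult_left_mono) auto
    have t3: "(1 + A) * e4 = \<eta> / 8"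
    proof -
      have "1 + A > 0" using A1 by simp
      then show ?thesis unfolding e4_def by (simp add: field_simps)
    qed
    have "A * ((real K + 1) / R + 2 * real K * \<epsilon>) = A * ((real K + 1) / R) + 2 * A * real K * \<epsilon>"
      by (simp add: algebra_simps)
    moreover have "2 * A * ((real K + 1) / R) \<le> \<eta> / 8" by (rule RK)
    moreover have "4 * A * real K * \<epsilon> \<le> \<eta> / 4" by (rule \<epsilon>K)
    ultimately have t4: "2 * (A * (1 - F.W / ln x ^ K)) \<le> \<eta> / 8 + \<eta> / 4" using t1 by linarith
    have expand: "F.EH / F.pp + A * (1 - F.W / ln x ^ K + F.EH / F.pp) + 2 * real K / F.z0 * (1 + ln (real F.M)) +
      real F.M / x + A * (1 - F.W / ln x ^ K + real F.M / x) =
      (1 + A) * (F.EH / F.pp) + 2 * (A * (1 - F.W / ln x ^ K)) + 2 * real K / F.z0 * (1 + ln (real F.M)) +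
      (1 + A) * (real F.M / x)" using pp0 x0 by (simp add: field_simps)
    have diffb: "\<bar>real (prime_pi_set x P) / F.pp - real (Psi_set x P) / x\<bar> \<le> \<eta>"
      using main expand t2 t3 t4 midb Mxb \<eta>0 by linarith
    have Psib: "real (Psi_set x P) \<ge> c * x"
      unfolding c_def by (rule Psi_lower[OF x1 u1 uU KU Psmall l70])
    have bpos: "real (Psi_set x P) / x \<ge> c" using Psib x0 by (simp add: le_divide_eq)
    have bpos': "real (Psi_set x P) / x > 0" using bpos c0 by linarith
    have "(real (prime_pi_set x P) / F.pp) / (real (Psi_set x P) / x) - 1 =
          (real (prime_pi_set x P) / F.pp - real (Psi_set x P) / x) / (real (Psi_set x P) / x)"
    proof -
      have gen: "\<And>a b::real. b \<noteq> 0 \<Longrightarrow> a / b - 1 = (a - b) / b" by (simp add: diff_divide_distrib)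
      show ?thesis using bpos' by (intro gen) linarith
    qed
    then have "\<bar>(real (prime_pi_set x P) / F.pp) / (real (Psi_set x P) / x) - 1\<bar> =
          \<bar>real (prime_pi_set x P) / F.pp - real (Psi_set x P) / x\<bar> / (real (Psi_set x P) / x)"
    proof -
      have gen2: "\<And>D b::real. b > 0 \<Longrightarrow> \<bar>D / b\<bar> = \<bar>D\<bar> / b" by (simp add: abs_divide)
      assume eq: "(real (prime_pi_set x P) / F.pp) / (real (Psi_set x P) / x) - 1 =
          (real (prime_pi_set x P) / F.pp - real (Psi_set x P) / x) / (real (Psi_set x P) / x)"
      show ?thesis unfolding eq by (rule gen2[OF bpos'])
    qed
    also have "\<dots> \<le> \<eta> / c"
      using diffb bpos c0 by (intro frac_le) auto
    also have "\<eta> / c = \<delta>" unfolding \<eta>_def using c0 by simp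
    finally show "\<bar>(real (prime_pi_set x P) / real (prime_pi x)) / (real (Psi_set x P) / x) - 1\<bar> \<le> \<delta>"
      unfolding F.pp_def .
  qed
qed


end
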